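(* Let $\mathcal{T},\mathcal{W}\in\mathbb{K}^{R\times R\times 2}$. Assume $\mathcal{T}$ has $\mathbb{K}$-rank $R$ with CPD $[\![\mathbf{A},\mathbf{B},\mathbf{C}]\!]$, where the columns of $\mathbf{C}$ have unit Euclidean norm, and let $\{\mathscr{L}_r\}_{r=1}^R$ be the spectrum of $\mathcal{T}$. If $$\|\mathcal{T}-\mathcal{W}\|_{\mathrm{sp}}<\frac{\sigma_{\min}(\mathbf{A})\,\sigma_{\min}(\mathbf{B})\,\min_{i\neq j}\chi(\mathscr{L}_i,\mathscr{L}_j)}{2},$$ then $\mathcal{W}$ is a simple tensor of $\mathbb{K}$-rank $R$, and $$\mathrm{md}[\mathcal{T},\mathcal{W}]\leq\frac{\|\mathcal{T}-\mathcal{W}\|_{\mathrm{sp}}}{\sigma_{\min}(\mathbf{A})\,\sigma_{\min}(\mathbf{B})}.$$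
   Context: $\mathbb{K}$ denotes $\mathbb{R}$ or $\mathbb{C}$; $\sigma_{\min}$ is the smallest (possibly zero) singular value. $\mathbb{K}$-rank and CPD $[\![\mathbf{A},\mathbf{B},\mathbf{C}]\!]=\sum_r\mathbf{a}_r\otimes\mathbf{b}_r\otimes\mathbf{c}_r$ as usual (minimal number of rank one terms with $\mathbb{K}$-factors). For $\mathcal{T}\in\mathbb{K}^{R\times R\times K}$ with slices $\mathbf{T}_k$: a nonzero $\mathbf{x}$ is a JGE vector if $\mathbf{T}_\ell\mathbf{x}=\lambda_\ell\mathbf{y}$ for all $\ell$ for some $\boldsymbol{\lambda}\in\mathbb{K}^K$ and nonzero $\mathbf{y}$; $\mathrm{span}(\boldsymbol{\lambda})$ is then a JGE value. The characteristic polynomial is $p_{\mathcal{T}}(\boldsymbol{\gamma})=\det(\sum_k\gamma_k\mathbf{T}_k)$; the algebraic multiplicity of $\mathrm{span}(\boldsymbol{\lambda})$ is the largest $m$ with $(\sum_k\lambda_k\gamma_k)^m\mid p_{\mathcal{T}}$. If $p_{\mathcal{T}}\not\equiv0$ factors as a product of $R$ linear forms $\prod_r(\sum_k\lambda_{r,k}\gamma_k)$, the spectrum is the list $\mathrm{span}(\boldsymbol{\lambda}_1),\dots,\mathrm{span}(\boldsymbol{\lambda}_R)$ (with multiplicity); for $\mathcal{T}=[\![\mathbf{A},\mathbf{B},\mathbf{C}]\!]$ of rank $R$ with $\mathbf{A},\mathbf{B}$ invertible it consists of the spans of the columns of $\mathbf{C}$. $\mathcal{T}$ is simple if some linear combination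 of its slices is invertible and $p_{\mathcal{T}}$ is a product of $R$ pairwise non-proportional linear forms. Chordal metric: $\chi(\mathscr{L}_1,\mathscr{L}_2)$ is the sine of the angle between one-dimensional subspaces. Matching distance: for spectra $\{\mathscr{L}_{1,r}\}$, $\{\mathscr{L}_{2,r}\}$ of $\mathcal{T}_1,\mathcal{T}_2$, $\mathrm{md}[\mathcal{T}_1,\mathcal{T}_2]=\min_{\pi\in S_R}\max_{r}\chi(\mathscr{L}_{1,r},\mathscr{L}_{2,\pi(r)})$. Spectral norm: $\|\mathcal{M}\|_{\mathrm{sp}}=\max_{\|\mathbf{x}\|=\|\mathbf{y}\|=\|\mathbf{z}\|=1}|\mathcal{M}\cdot_1\mathbf{x}\cdot_2\mathbf{y}\cdot_3\mathbf{z}|$. *)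

theory Defs
  imports "HOL-Analysis.Analysis"
begin

text \<open>The field K is encoded by a flag: realK = True means K = reals (embedded in the
complex numbers), realK = False means K = complex numbers.\<close>

definition inK :: "bool \<Rightarrow> complex \<Rightarrow> bool" where
  "inK realK z \<longleftrightarrow> (realK \<longrightarrow> z \<in> \<real>)"

definition vecK :: "bool \<Rightarrow> complex ^ 'n \<Rightarrow> bool" where
  "vecK realK x \<longleftrightarrow> (\<forall>i. inK realK (x $ i))"

type_synonym ('i, 'j, 'k) tensor = "'i \<Rightarrow> 'j \<Rightarrow> 'k \<Rightarrow> complex"

definition tensorK :: "bool \<Rightarrow> ('i, 'j, 'k) tensor \<Rightarrow> bool" where
  "tensorK realK T \<longleftrightarrow> (\<forall>i j k. inK realK (T i j k))"

definition cpd :: "complex ^ 'r ^ 'i \<Rightarrow> complex ^ 'r ^ 'j \<Rightarrow> complex ^ 'r ^ 'k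
    \<Rightarrow> ('i::finite, 'j::finite, 'k::finite) tensor" where
  "cpd A B C = (\<lambda>i j k. \<Sum>r\<in>UNIV. A $ i $ r * B $ j $ r * C $ k $ r)"

definition rank_le :: "bool \<Rightarrow> ('i::finite, 'j::finite, 'k::finite) tensor \<Rightarrow> nat \<Rightarrow> bool" where
  "rank_le realK T m \<longleftrightarrow>
     (\<exists>a b c. (\<forall>r i. inK realK (a r i)) \<and> (\<forall>r j. inK realK (b r j)) \<and>
              (\<forall>r k. inK realK (c r k)) \<and>
              T = (\<lambda>i j k. \<Sum>r<m. a r i * b r j * c r k))"

definition Krank :: "bool \<Rightarrow> ('i::finite, 'j::finite, 'k::finite) tensor \<Rightarrow> nat" where
  "Krank realK T = (LEAST m. rank_le realK T m)"

definition slice :: "('i, 'j, 'k) tensor \<Rightarrow> 'k \<Rightarrow> complex ^ 'j ^ 'i" where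
  "slice T k = (\<chi> i j. T i j k)"

definition slicecomb :: "('n::finite, 'n, 'k::finite) tensor \<Rightarrow> complex ^ 'k \<Rightarrow> complex ^ 'n ^ 'n" where
  "slicecomb T \<gamma> = (\<Sum>k\<in>UNIV. (\<chi> i j. \<gamma> $ k * slice T k $ i $ j))"

definition charpoly :: "('n::finite, 'n, 'k::finite) tensor \<Rightarrow> complex ^ 'k \<Rightarrow> complex" where
  "charpoly T \<gamma> = det (slicecomb T \<gamma>)"

definition linform :: "complex ^ 'k \<Rightarrow> complex ^ 'k \<Rightarrow> complex" where
  "linform l \<gamma> = (\<Sum>k\<in>UNIV. l $ k * \<gamma> $ k)"

text \<open>L r are representatives of the lines of the spectrum of T: p_T is not identically
zero and factors as the product of the R linear forms with coefficient vectors L r in K^2.\<close>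
definition is_spectrum :: "bool \<Rightarrow> ('n::finite, 'n, 'k::finite) tensor \<Rightarrow> ('n \<Rightarrow> complex ^ 'k) \<Rightarrow> bool" where
  "is_spectrum realK T L \<longleftrightarrow>
     (\<forall>r. vecK realK (L r)) \<and>
     (\<exists>\<gamma>. vecK realK \<gamma> \<and> charpoly T \<gamma> \<noteq> 0) \<and>
     (\<forall>\<gamma>. vecK realK \<gamma> \<longrightarrow> charpoly T \<gamma> = (\<Prod>r\<in>UNIV. linform (L r) \<gamma>))"

definition proportional :: "complex ^ 'k \<Rightarrow> complex ^ 'k \<Rightarrow> bool" where
  "proportional u v \<longleftrightarrow> (\<exists>c. u = c *s v) \<or> (\<exists>c. v = c *s u)"

definition simple_tensor :: "bool \<Rightarrow> ('n::finite, 'n, 'k::finite) tensor \<Rightarrow> bool" where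
  "simple_tensor realK T \<longleftrightarrow>
     (\<exists>\<gamma>. vecK realK \<gamma> \<and> invertible (slicecomb T \<gamma>)) \<and>
     (\<exists>L :: 'n \<Rightarrow> complex ^ 'k. (\<forall>r. vecK realK (L r)) \<and>
          (\<forall>\<gamma>. vecK realK \<gamma> \<longrightarrow> charpoly T \<gamma> = (\<Prod>r\<in>UNIV. linform (L r) \<gamma>)) \<and>
          (\<forall>r s. r \<noteq> s \<longrightarrow> \<not> proportional (L r) (L s)))"

text \<open>Chordal metric: sine of the angle between span u and span v.\<close>
definition chordal :: "complex ^ 'k \<Rightarrow> complex ^ 'k \<Rightarrow> real" where
  "chordal u v = sqrt (1 - (cmod (\<Sum>k\<in>UNIV. cnj (u $ k) * v $ k))\<^sup>2 / ((norm u)\<^sup>2 * (norm v)\<^sup>2))"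

definition md :: "('n::finite \<Rightarrow> complex ^ 'k) \<Rightarrow> ('n \<Rightarrow> complex ^ 'k) \<Rightarrow> real" where
  "md L1 L2 = Min ((\<lambda>\<pi>. Max ((\<lambda>r. chordal (L1 r) (L2 (\<pi> r))) ` UNIV)) ` {\<pi>. \<pi> permutes UNIV})"

definition spnorm :: "bool \<Rightarrow> ('i::finite, 'j::finite, 'k::finite) tensor \<Rightarrow> real" where
  "spnorm realK M = Sup {cmod (\<Sum>i\<in>UNIV. \<Sum>j\<in>UNIV. \<Sum>k\<in>UNIV. M i j k * x $ i * y $ j * z $ k) |x y z.
       norm x = 1 \<and> norm y = 1 \<and> norm z = 1 \<and> vecK realK x \<and> vecK realK y \<and> vecK realK z}"

definition sigma_min :: "complex ^ 'n ^ 'n \<Rightarrow> real" where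
  "sigma_min A = Inf {norm (A *v x) | x. norm x = 1}"

end

theory Submission
  imports Defs "HOL-Complex_Analysis.Conformal_Mappings"
begin


definition wedge :: "complex^2 \<Rightarrow> complex^2 \<Rightarrow> complex" where
  "wedge u v = u$1 * v$2 - u$2 * v$1"
definition perp :: "complex^2 \<Rightarrow> complex^2" where
  "perp l = (\<chi> k. if k = 1 then - l$2 else l$1)"

lemma perp_nth[simp]: "perp l $ 1 = - l$2" "perp l $ 2 = l$1"
  by (auto simp: perp_def)

lemma norm2_sq: "(norm (x::complex^2))^2 = (cmod (x$1))^2 + (cmod (x$2))^2"
  by (simp add: norm_vec_def L2_set_def sum_2)

lemma lagrange_c:
  fixes a b c d :: complex
  shows "((cmod a)^2 + (cmod b)^2) * ((cmod c)^2 + (cmod d)^2) = (cmod (cnj a * c + cnj b * d))^2 + (cmod (a*d - b*c))^2"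
  unfolding cmod_power2 by (simp add: power2_eq_square algebra_simps)

lemma lagrange2:
  fixes u v :: "complex^2"
  shows "(norm u)^2 * (norm v)^2 = (cmod (\<Sum>k\<in>UNIV. cnj (u $ k) * v $ k))^2 + (cmod (wedge u v))^2"
  unfolding norm2_sq sum_2 wedge_def by (rule lagrange_c)

lemma normsq: "(norm (v::complex^'n))^2 = (\<Sum>i\<in>UNIV. (cmod (v$i))^2)"
  by (simp add: norm_vec_def L2_set_def sum_nonneg)

lemma cnj_sum_sq: "(\<Sum>i\<in>UNIV. cnj (v$i) * v$i) = complex_of_real ((norm (v::complex^'n))^2)"
  unfolding normsq of_real_sum
  by (rule sum.cong) (simp_all add: mult.commute complex_norm_square[symmetric] of_real_power)

lemma slicecomb_nth: "slicecomb X g $ i $ j = (\<Sum>k\<in>UNIV. g$k * X i j k)"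
  unfolding slicecomb_def sum_component vec_lambda_beta slice_def ..

lemma mv_slicecomb: "(slicecomb X g *v y) $ i = (\<Sum>j\<in>UNIV. \<Sum>k\<in>UNIV. g$k * X i j k * y$j)"
  by (simp add: matrix_vector_mult_def slicecomb_nth sum_distrib_right)

lemma inK_simps: "inK rK 0" "inK rK 1" "inK rK a \<Longrightarrow> inK rK b \<Longrightarrow> inK rK (a*b)"
  "inK rK a \<Longrightarrow> inK rK b \<Longrightarrow> inK rK (a+b)" "inK rK a \<Longrightarrow> inK rK b \<Longrightarrow> inK rK (a-b)"
  "inK rK a \<Longrightarrow> inK rK (-a)" "inK rK a \<Longrightarrow> inK rK (cnj a)" "inK rK (of_real r)"
  "inK rK a \<Longrightarrow> inK rK b \<Longrightarrow> inK rK (a/b)"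
  by (auto simp: inK_def Reals_cnj_iff)

lemma inK_scaleR: "inK rK a \<Longrightarrow> inK rK (r *\<^sub>R a)"
  by (auto simp: inK_def scaleR_conv_of_real)

lemma inK_sum: "(\<And>i. i\<in>S \<Longrightarrow> inK rK (f i)) \<Longrightarrow> inK rK (sum f S)"
  by (auto simp: inK_def)
lemma inK_prod: "(\<And>i. i\<in>S \<Longrightarrow> inK rK (f i)) \<Longrightarrow> inK rK (prod f S)"
  by (auto simp: inK_def)

lemma spnorm_bdd: fixes M :: "('i::finite,'j::finite,'k::finite) tensor" shows "bdd_above {cmod (\<Sum>i\<in>UNIV. \<Sum>j\<in>UNIV. \<Sum>k\<in>UNIV. M i j k * x $ i * y $ j * z $ k) |x y z.
       norm x = 1 \<and> norm y = 1 \<and> norm z = 1 \<and> vecK rK x \<and> vecK rK y \<and> vecK rK z}"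
proof (rule bdd_aboveI, clarify)
  fix x :: "complex^'i" and y :: "complex^'j" and z :: "complex^'k"
  assume a0: "norm x = 1" "norm y = 1" "norm z = 1" "vecK rK x" "vecK rK y" "vecK rK z"
  then have a: "norm x = 1 \<and> norm y = 1 \<and> norm z = 1" by simp
  have "cmod (\<Sum>i\<in>UNIV. \<Sum>j\<in>UNIV. \<Sum>k\<in>UNIV. M i j k * x $ i * y $ j * z $ k)
      \<le> (\<Sum>i\<in>UNIV. \<Sum>j\<in>UNIV. \<Sum>k\<in>UNIV. cmod (M i j k * x $ i * y $ j * z $ k))"
    by (rule order_trans[OF norm_sum sum_mono], rule order_trans[OF norm_sum sum_mono], rule norm_sum)
  also have "\<dots> \<le> (\<Sum>i\<in>UNIV. \<Sum>j\<in>UNIV. \<Sum>k\<in>UNIV. cmod (M i j k))"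
  proof (intro sum_mono)
    fix i j k
    have "cmod (x$i) \<le> 1" "cmod (y$j) \<le> 1" "cmod (z$k) \<le> 1"
      using a Finite_Cartesian_Product.norm_nth_le[of x i] Finite_Cartesian_Product.norm_nth_le[of y j]
        Finite_Cartesian_Product.norm_nth_le[of z k] by auto
    then show "cmod (M i j k * x $ i * y $ j * z $ k) \<le> cmod (M i j k)"
      unfolding norm_mult mult.assoc
      by (intro mult_left_le) (auto intro!: mult_le_one)
  qed
  finally show "cmod (\<Sum>i\<in>UNIV. \<Sum>j\<in>UNIV. \<Sum>k\<in>UNIV. M i j k * x $ i * y $ j * z $ k)
      \<le> (\<Sum>i\<in>UNIV. \<Sum>j\<in>UNIV. \<Sum>k\<in>UNIV. cmod (M i j k))" .
qed

lemma norm_axis_c: "norm (axis i (1::complex)) = 1"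
proof -
  have "\<And>j. (cmod (axis i (1::complex) $ j))^2 = (if j = i then 1 else 0)" by (simp add: axis_def)
  then show ?thesis by (simp add: norm_vec_def L2_set_def)
qed

lemma vecK_axis: "vecK rK (axis i (1::complex))"
  by (auto simp: vecK_def axis_def inK_def)

lemma spnorm_upper:
  assumes "norm x = 1" "norm y = 1" "norm z = 1" "vecK rK x" "vecK rK y" "vecK rK z"
  shows "cmod (\<Sum>i\<in>UNIV. \<Sum>j\<in>UNIV. \<Sum>k\<in>UNIV. M i j k * x $ i * y $ j * z $ k) \<le> spnorm rK M"
  unfolding spnorm_def
  by (rule cSup_upper[OF _ spnorm_bdd]) (use assms in blast)

lemma spnorm_nonneg: "0 \<le> spnorm rK (M::('i::finite,'j::finite,'k::finite) tensor)"
proof -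
  obtain i0 :: 'i and j0 :: 'j and k0 :: 'k where True by blast
  have "0 \<le> cmod (\<Sum>i\<in>UNIV. \<Sum>j\<in>UNIV. \<Sum>k\<in>UNIV. M i j k * axis i0 1 $ i * axis j0 1 $ j * axis k0 (1::complex) $ k)"
    by simp
  also have "\<dots> \<le> spnorm rK M"
    by (rule spnorm_upper) (auto simp: norm_axis_c vecK_axis)
  finally show ?thesis .
qed

lemma vecK_scaleR: "vecK rK x \<Longrightarrow> vecK rK (r *\<^sub>R x)"
  unfolding vecK_def inK_def vector_scaleR_component by (auto simp: scaleR_conv_of_real)

lemma E_bound:
  fixes E :: "('n::finite,'n,'k::finite) tensor" and g :: "complex^'k" and y :: "complex^'n"
  assumes EK: "tensorK rK E" and gK: "vecK rK g" and yK: "vecK rK y"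
  shows "norm (slicecomb E g *v y) \<le> spnorm rK E * norm g * norm y"
proof (cases "slicecomb E g *v y = 0 \<or> g = 0 \<or> y = 0")
  case True
  then have "slicecomb E g *v y = 0"
    by (auto simp: vec_eq_iff mv_slicecomb)
  then show ?thesis using spnorm_nonneg[of rK E] by simp
next
  case False
  define v where "v = slicecomb E g *v y"
  have nv: "norm v > 0" "norm g > 0" "norm y > 0" using False v_def by auto
  define x where "x = (1/norm v) *\<^sub>R (\<chi> i. cnj (v$i))"
  define g' where "g' = (1/norm g) *\<^sub>R g"
  define y' where "y' = (1/norm y) *\<^sub>R y"
  have vK: "vecK rK v" unfolding v_def vecK_def mv_slicecomb
    using EK gK yK by (auto simp: tensorK_def vecK_def intro!: inK_sum inK_simps)
  have "norm (\<chi> i. cnj (v$i)) = norm v"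
    unfolding norm_vec_def by simp
  then have n1: "norm x = 1" "norm g' = 1" "norm y' = 1"
    using nv by (auto simp: x_def g'_def y'_def)
  have K1: "vecK rK x" "vecK rK g'" "vecK rK y'"
    using vK gK yK unfolding x_def g'_def y'_def
    by (auto intro!: inK_scaleR simp: vecK_def inK_simps)
  define cc where "cc = complex_of_real (1/(norm v * norm y * norm g))"
  have pt: "E i j k * x $ i * y' $ j * g' $ k = cc * cnj (v$i) * (g$k * E i j k * y$j)" for i j k
    unfolding x_def y'_def g'_def cc_def vector_scaleR_component vec_lambda_beta
    by (simp add: scaleR_conv_of_real of_real_mult)
  have "(\<Sum>i\<in>UNIV. \<Sum>j\<in>UNIV. \<Sum>k\<in>UNIV. E i j k * x $ i * y' $ j * g' $ k)
      = (\<Sum>i\<in>UNIV. cc * cnj (v$i) * (\<Sum>j\<in>UNIV. \<Sum>k\<in>UNIV. g$k * E i j k * y$j))"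
    unfolding pt sum_distrib_left by simp
  also have "\<dots> = cc * (\<Sum>i\<in>UNIV. cnj (v$i) * v$i)"
    unfolding sum_distrib_left v_def mv_slicecomb by (simp add: mult.assoc)
  also have "\<dots> = of_real (norm v / (norm y * norm g))"
    unfolding cnj_sum_sq cc_def using nv by (simp add: power2_eq_square)
  finally have "norm v / (norm y * norm g) \<le> spnorm rK E"
    using spnorm_upper[OF n1(1) n1(3) n1(2) K1(1) K1(3) K1(2), of E] nv
    by (simp only: of_real_mult[symmetric] of_real_divide[symmetric] norm_of_real)
  then show ?thesis using nv unfolding v_def[symmetric]
    by (simp add: field_simps)
qed



lemma mv_scaleR: "(A::complex^'n^'m) *v (r *\<^sub>R x) = r *\<^sub>R (A *v x)"
  unfolding vec_eq_iff matrix_vector_mult_def vector_scaleR_component vec_lambda_beta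
  by (simp add: scaleR_sum_right)

lemma sigma_set_ne: "{norm ((A::complex^'n^'n) *v x) | x. norm x = 1} \<noteq> {}"
  using norm_axis_c by blast

lemma sigma_min_nonneg: "0 \<le> sigma_min A"
  unfolding sigma_min_def by (rule cInf_greatest[OF sigma_set_ne]) auto

lemma sigma_min_le: "sigma_min A * norm x \<le> norm ((A::complex^'n^'n) *v x)"
proof (cases "x = 0")
  case True then show ?thesis by simp
next
  case False
  then have nx: "norm x > 0" by simp
  define x' where "x' = (1/norm x) *\<^sub>R x"
  have "norm x' = 1" using nx by (simp add: x'_def)
  then have "sigma_min A \<le> norm (A *v x')"
    unfolding sigma_min_def
    by (intro cInf_lower) (auto intro: bdd_belowI[of _ 0])
  also have "\<dots> = norm (A *v x) / norm x"
    by (simp add: x'_def mv_scaleR)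
  finally show ?thesis using nx by (simp add: field_simps)
qed

lemma cs_bil: "cmod (\<Sum>r\<in>UNIV. (a::complex^'n) $ r * b $ r) \<le> norm a * norm b"
proof -
  have "cmod (\<Sum>r\<in>UNIV. a $ r * b $ r) \<le> (\<Sum>r\<in>UNIV. \<bar>cmod (a$r)\<bar> * \<bar>cmod (b$r)\<bar>)"
    by (rule order_trans[OF norm_sum]) (simp add: norm_mult)
  also have "\<dots> \<le> norm a * norm b"
    unfolding norm_vec_def by (rule L2_set_mult_ineq)
  finally show ?thesis .
qed

lemma sigma_min_transpose:
  assumes inv: "invertible (B::complex^'n^'n)"
  shows "sigma_min B * norm y \<le> norm (transpose B *v y)"
proof (cases "y = 0")
  case True then show ?thesis by simp
next
  case False
  obtain Bi where Bi: "B ** Bi = mat 1" using inv invertible_right_inverse by blast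
  define w where "w = (\<chi> j. cnj (y$j))"
  define x where "x = Bi *v w"
  have Bx: "B *v x = w" unfolding x_def matrix_vector_mul_assoc Bi by simp
  have nw: "norm w = norm y" unfolding w_def norm_vec_def by simp
  have s1: "sigma_min B * norm x \<le> norm y" using sigma_min_le[of B x] Bx nw by simp
  have "(\<Sum>r\<in>UNIV. (transpose B *v y) $ r * x $ r) = (\<Sum>j\<in>UNIV. y$j * (B *v x)$j)"
  proof -
    have "(\<Sum>r\<in>UNIV. (transpose B *v y) $ r * x $ r) = (\<Sum>r\<in>UNIV. \<Sum>j\<in>UNIV. y$j * (B$j$r * x$r))"
      unfolding matrix_vector_mult_def transpose_def
      by (simp add: sum_distrib_left sum_distrib_right mult.commute mult.left_commute)
    also have "\<dots> = (\<Sum>j\<in>UNIV. \<Sum>r\<in>UNIV. y$j * (B$j$r * x$r))" by (rule sum.swap)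
    also have "\<dots> = (\<Sum>j\<in>UNIV. y$j * (B *v x)$j)"
      by (simp add: matrix_vector_mult_def sum_distrib_left)
    finally show ?thesis .
  qed
  also have "\<dots> = (\<Sum>j\<in>UNIV. cnj (y$j) * y$j)" unfolding Bx w_def by (simp add: mult.commute)
  also have "\<dots> = of_real ((norm y)^2)" by (rule cnj_sum_sq)
  finally have "(norm y)^2 \<le> norm (transpose B *v y) * norm x"
    using cs_bil[of "transpose B *v y" x] by (simp only: norm_of_real abs_power2 of_real_power[symmetric])
  then have "sigma_min B * (norm y)^2 \<le> norm (transpose B *v y) * (sigma_min B * norm x)"
    using sigma_min_nonneg[of B] by (simp add: mult_left_mono algebra_simps)
  also have "\<dots> \<le> norm (transpose B *v y) * norm y"
    by (rule mult_left_mono[OF s1]) simp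
  finally show ?thesis using False by (simp add: power2_eq_square)
qed

lemma chordal_wedge:
  fixes u v :: "complex^2"
  assumes "u \<noteq> 0" "v \<noteq> 0"
  shows "chordal u v = cmod (wedge u v) / (norm u * norm v)"
proof -
  have p: "norm u > 0" "norm v > 0" using assms by auto
  have l: "(norm u)^2 * (norm v)^2 = (cmod (\<Sum>k\<in>UNIV. cnj (u $ k) * v $ k))^2 + (cmod (wedge u v))^2"
    by (rule lagrange2)
  define a where "a = (cmod (\<Sum>k\<in>UNIV. cnj (u $ k) * v $ k))^2"
  define b where "b = (cmod (wedge u v))^2"
  define P where "P = (norm u)^2 * (norm v)^2"
  have P1: "P > 0" using p unfolding P_def by simp
  have P: "P = a + b" "P > 0" using l P1 unfolding a_def b_def P_def by simp_all
  have "1 - a / P = b / P" using P by (simp add: field_simps)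
  also have "\<dots> = (cmod (wedge u v) / (norm u * norm v))^2"
    unfolding b_def P_def by (simp add: power_divide power_mult_distrib)
  finally have "1 - (cmod (\<Sum>k\<in>UNIV. cnj (u $ k) * v $ k))^2 / ((norm u)^2 * (norm v)^2)
      = (cmod (wedge u v) / (norm u * norm v))^2" unfolding a_def P_def .
  then show ?thesis unfolding chordal_def by simp
qed

lemma chordal_nonneg: "0 \<le> chordal (u::complex^2) v"
proof (cases "u = 0 \<or> v = 0")
  case True then show ?thesis by (auto simp: chordal_def)
next
  case False then show ?thesis by (simp add: chordal_wedge)
qed

lemma chordal_le1: "chordal (u::complex^2) v \<le> 1"
  unfolding chordal_def by simp

lemma wedge_swap: "wedge v u = - wedge u v"
  by (simp add: wedge_def)

lemma chordal_sym: fixes u v :: "complex^2" assumes "u \<noteq> 0" "v \<noteq> 0" shows "chordal u v = chordal v u"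
  unfolding chordal_wedge[OF assms] chordal_wedge[OF assms(2,1)] wedge_swap[of v u] by (simp add: mult.commute)

lemma wedge_ident: "wedge a b *s c = wedge c b *s a + wedge a c *s b"
  unfolding vec_eq_iff forall_2 wedge_def by (simp add: algebra_simps)

lemma norm_smult: "norm (c *s (x::complex^'n)) = cmod c * norm x"
proof -
  have "(norm (c *s x))^2 = (cmod c * norm x)^2"
    unfolding normsq power_mult_distrib by (simp add: norm_mult power_mult_distrib sum_distrib_left)
  then show ?thesis by (simp add: power2_eq_iff_nonneg)
qed

lemma chordal_tri:
  fixes a b c :: "complex^2"
  assumes "a \<noteq> 0" "b \<noteq> 0" "c \<noteq> 0"
  shows "chordal a b \<le> chordal c b + chordal a c"
proof -
  have p: "norm a > 0" "norm b > 0" "norm c > 0" using assms by auto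
  have "cmod (wedge a b) * norm c \<le> cmod (wedge c b) * norm a + cmod (wedge a c) * norm b"
    using norm_triangle_ineq[of "wedge c b *s a" "wedge a c *s b"]
    unfolding wedge_ident[symmetric] norm_smult by simp
  then have "cmod (wedge a b) * norm c / (norm a * norm b * norm c) \<le>
     (cmod (wedge c b) * norm a + cmod (wedge a c) * norm b) / (norm a * norm b * norm c)"
    using p by (intro divide_right_mono) auto
  then show ?thesis using p unfolding chordal_wedge[OF assms(1,2)] chordal_wedge[OF assms(3,2)]
      chordal_wedge[OF assms(1,3)]
    by (simp add: field_simps)
qed

lemma chordal_cong:
  fixes u u' v :: "complex^2"
  assumes "u \<noteq> 0" "u' \<noteq> 0" "v \<noteq> 0" "wedge u u' = 0"
  shows "chordal u v = chordal u' v"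
proof -
  have p: "norm u > 0" "norm u' > 0" "norm v > 0" using assms by auto
  have "wedge u' v *s u = wedge u v *s u'"
    using wedge_ident[of u' v u] assms(4) wedge_swap[of u u'] by simp
  then have "cmod (wedge u' v) * norm u = cmod (wedge u v) * norm u'"
    by (metis norm_smult)
  then show ?thesis using p unfolding chordal_wedge[OF assms(1,3)] chordal_wedge[OF assms(2,3)]
    by (simp add: field_simps)
qed

lemma chordal_zero_iff: "(u::complex^2) \<noteq> 0 \<Longrightarrow> v \<noteq> 0 \<Longrightarrow> chordal u v = 0 \<longleftrightarrow> wedge u v = 0"
  using chordal_wedge[of u v] by auto

lemma linform_perp: "linform q (perp l) = - wedge q l"
  by (simp add: linform_def sum_2 wedge_def)

lemma linform_self_perp: "linform l (perp l) = 0"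
  by (simp add: linform_perp wedge_def)

definition wdir :: "complex^2 \<Rightarrow> complex^2" where
  "wdir c = (\<chi> k. if k = 1 then - cnj (c$2) else cnj (c$1))"

lemma wdir_nth[simp]: "wdir c $ 1 = - cnj (c$2)" "wdir c $ 2 = cnj (c$1)"
  by (auto simp: wdir_def)

lemma wedge_param: assumes "norm c = 1" shows "wedge c (c + z *s wdir c) = z"
proof -
  have "(cmod (c$1))^2 + (cmod (c$2))^2 = 1" using assms norm2_sq[of c] by simp
  then have h: "c$1 * cnj (c$1) + c$2 * cnj (c$2) = 1"
    by (metis complex_norm_square of_real_1 of_real_add)
  have "wedge c (c + z *s wdir c) = z * (c$1 * cnj (c$1) + c$2 * cnj (c$2))"
    by (simp add: wedge_def algebra_simps)
  then show ?thesis using h by simp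
qed

lemma np_c: fixes a b z :: complex
  shows "(cmod (a - z*cnj b))^2 + (cmod (b + z*cnj a))^2 = ((cmod a)^2 + (cmod b)^2)*(1+(cmod z)^2)"
proof -
  have "complex_of_real ((cmod (a - z*cnj b))^2 + (cmod (b + z*cnj a))^2) = complex_of_real (((cmod a)^2 + (cmod b)^2)*(1+(cmod z)^2))"
    by (simp only: of_real_add of_real_mult of_real_1 complex_norm_square) (simp add: algebra_simps)
  then show ?thesis by (simp only: of_real_eq_iff)
qed

lemma norm_param: assumes "norm c = 1" shows "(norm (c + z *s wdir c))^2 = 1 + (cmod z)^2"
proof -
  have n: "(cmod (c$1))^2 + (cmod (c$2))^2 = 1" using assms norm2_sq[of c] by simp
  have "(norm (c + z *s wdir c))^2 = (cmod (c$1 - z * cnj (c$2)))^2 + (cmod (c$2 + z * cnj (c$1)))^2"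
    unfolding norm2_sq by simp
  also have "\<dots> = ((cmod (c$1))^2 + (cmod (c$2))^2) * (1 + (cmod z)^2)"
    by (rule np_c)
  finally show ?thesis using n by simp
qed

lemma param_nz: assumes "norm c = 1" shows "c + z *s wdir c \<noteq> 0"
proof
  assume "c + z *s wdir c = 0"
  then have "(norm (c + z *s wdir c))^2 = 0" by simp
  then show False using norm_param[OF assms, of z] by (simp add: add_nonneg_eq_0_iff)
qed

lemma chordal_param: assumes "norm c = 1"
  shows "chordal c (c + z *s wdir c) = cmod z / sqrt (1 + (cmod z)^2)"
proof -
  have "c \<noteq> 0" using assms by auto
  moreover have "norm (c + z *s wdir c) = sqrt (1 + (cmod z)^2)"
    using norm_param[OF assms, of z] by (metis norm_ge_zero real_sqrt_unique)
  ultimately show ?thesis using param_nz[OF assms] assms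
    by (simp add: chordal_wedge wedge_param)
qed



definition matK :: "bool \<Rightarrow> complex^'n^'m \<Rightarrow> bool" where
  "matK rK M \<longleftrightarrow> (\<forall>i j. inK rK (M$i$j))"

lemma det_inK: "matK rK M \<Longrightarrow> inK rK (det M)"
  unfolding det_def matK_def
  by (intro inK_sum inK_prod inK_simps) (auto simp: inK_def)

lemma null_vec:
  fixes M :: "complex^'n^'n"
  assumes MK: "matK rK M" and d: "det M = 0"
  shows "\<exists>y. vecK rK y \<and> y \<noteq> 0 \<and> M *v y = 0"
proof -
  have "\<not> inj ((*v) M)"
    using det_nz_iff_inj_gen[OF matrix_vector_mul_linear_gen[of M]] d by simp
  then obtain a b where ab: "a \<noteq> b" "M *v a = M *v b" unfolding inj_def by blast
  define y0 where "y0 = a - b"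
  have y0: "y0 \<noteq> 0" "M *v y0 = 0" using ab by (auto simp: y0_def matrix_vector_mult_diff_distrib)
  show ?thesis
  proof (cases rK)
    case False
    then show ?thesis using y0 by (auto simp: vecK_def inK_def)
  next
    case True
    then have Mr: "M$i$j = of_real (Re (M$i$j))" for i j
      using MK by (auto simp: matK_def inK_def Reals_def)
    define re where "re = (\<chi> j. complex_of_real (Re (y0$j)))"
    define im where "im = (\<chi> j. complex_of_real (Im (y0$j)))"
    have "M *v re = (\<chi> i. complex_of_real (Re ((M *v y0)$i)))"
      unfolding re_def matrix_vector_mult_def vec_eq_iff
      by (auto simp: Re_sum of_real_sum intro!: sum.cong) (subst (1 2) Mr, simp)
    then have Mre: "M *v re = 0" using y0 by (simp add: vec_eq_iff)
    have "M *v im = (\<chi> i. complex_of_real (Im ((M *v y0)$i)))"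
      unfolding im_def matrix_vector_mult_def vec_eq_iff
      by (auto simp: Im_sum of_real_sum intro!: sum.cong) (subst (1 2) Mr, simp)
    then have Mim: "M *v im = 0" using y0 by (simp add: vec_eq_iff)
    have "re \<noteq> 0 \<or> im \<noteq> 0"
    proof (rule ccontr)
      assume "\<not> (re \<noteq> 0 \<or> im \<noteq> 0)"
      then have "\<forall>j. Re (y0$j) = 0 \<and> Im (y0$j) = 0" by (auto simp: re_def im_def vec_eq_iff)
      then have "y0 = 0" by (auto simp: vec_eq_iff complex_eq_iff)
      then show False using y0 by simp
    qed
    moreover have "vecK rK re" "vecK rK im" by (auto simp: vecK_def inK_def re_def im_def)
    ultimately show ?thesis using Mre Mim by blast
  qed
qed

lemma norm_comp_ge:
  fixes u v :: "complex^'n"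
  assumes "d \<ge> 0" "\<And>r. d * cmod (v$r) \<le> cmod (u$r)"
  shows "d * norm v \<le> norm u"
proof -
  have "norm (d *\<^sub>R v) \<le> norm u"
    by (rule norm_le_componentwise_cart) (use assms in simp)
  then show ?thesis using assms by simp
qed

lemma diag_right: "(A ** (\<chi> i j. if i = j then d i else 0)) $ i $ j = A$i$j * (d j :: 'a::comm_ring_1)"
proof -
  have "(\<Sum>k\<in>UNIV. A$i$k * (\<chi> i j. if i = j then d i else 0) $ k $ j) = (\<Sum>k\<in>UNIV. if k = j then A$i$j * d j else 0)"
    by (rule sum.cong) auto
  then show ?thesis by (simp add: matrix_matrix_mult_def)
qed

lemma det_diag3:
  fixes A B :: "'a::comm_ring_1^'n^'n"
  shows "det (A ** (\<chi> i j. if i = j then d i else 0) ** B) = det A * (\<Prod>i\<in>UNIV. d i) * det B"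
  by (simp add: det_mul det_diagonal)



locale thm_setup =
  fixes realK :: bool
    and T W :: "('n::finite, 'n, 2) tensor"
    and A B :: "complex ^ 'n ^ 'n"
    and C :: "complex ^ 'n ^ 2"
    and L :: "'n \<Rightarrow> complex ^ 2"
  assumes R2: "CARD('n) \<ge> 2"
    and TK: "tensorK realK T" and WK: "tensorK realK W"
    and AK: "\<forall>i r. inK realK (A $ i $ r)" and BK: "\<forall>i r. inK realK (B $ i $ r)"
    and CK: "\<forall>k r. inK realK (C $ k $ r)"
    and cpdT: "T = cpd A B C"
    and Cunit: "\<forall>r. norm (column r C) = 1"
    and specT: "is_spectrum realK T L"
    and small: "spnorm realK (\<lambda>i j k. T i j k - W i j k)
        < sigma_min A * sigma_min B * Min {chordal (L i) (L j) |i j. i \<noteq> j} / 2"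
begin

definition "Et = (\<lambda>i j k. T i j k - W i j k)"
definition "eps = spnorm realK Et"
definition "sig = sigma_min A * sigma_min B"
definition "delta = Min {chordal (L i) (L j) |i j. i \<noteq> j}"
definition "mm = eps / sig"
definition "cc r = column r C"
definition "Wt t = (\<lambda>i j k. T i j k - complex_of_real t * Et i j k)"

lemma Wt1: "Wt 1 = W" by (simp add: Wt_def Et_def)
lemma Wt0: "Wt 0 = T" by (simp add: Wt_def)

lemma cc_norm: "norm (cc r) = 1" using Cunit by (simp add: cc_def)
lemma cc_nz: "cc r \<noteq> 0" using cc_norm[of r] by auto
lemma cc_K: "vecK realK (cc r)" using CK by (simp add: cc_def vecK_def column_def)

lemma EtK: "tensorK realK Et" using TK WK by (auto simp: tensorK_def Et_def intro: inK_simps)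
lemma WtK: "tensorK realK (Wt t)" using TK EtK by (auto simp: tensorK_def Wt_def intro!: inK_simps)

lemma slicecomb_K: "tensorK realK X \<Longrightarrow> vecK realK g \<Longrightarrow> matK realK (slicecomb X g)"
  unfolding matK_def slicecomb_nth tensorK_def vecK_def by (auto intro!: inK_sum inK_simps)

lemma perp_K: "vecK realK l \<Longrightarrow> vecK realK (perp l)"
  unfolding vecK_def forall_2 by (auto intro: inK_simps)

lemma norm_perp: "norm (perp l) = norm l"
proof -
  have "(norm (perp l))^2 = (norm l)^2" using norm2_sq[of "perp l"] norm2_sq[of l] by simp
  then show ?thesis by (simp add: power2_eq_iff_nonneg)
qed

lemma perp_nz: "l \<noteq> 0 \<Longrightarrow> perp l \<noteq> 0"
  using norm_perp[of l] by auto

lemma T_mat: "slicecomb T g = A ** (\<chi> i j. if i = j then linform (cc i) g else 0) ** transpose B"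
proof -
  have "slicecomb T g $ i $ j = (A ** (\<chi> i j. if i = j then linform (cc i) g else 0) ** transpose B) $ i $ j" for i j
  proof -
    have "slicecomb T g $ i $ j = (\<Sum>k\<in>UNIV. \<Sum>r\<in>UNIV. g$k * (A $ i $ r * B $ j $ r * C $ k $ r))"
      by (simp add: slicecomb_nth cpdT cpd_def sum_distrib_left)
    also have "\<dots> = (\<Sum>r\<in>UNIV. \<Sum>k\<in>UNIV. g$k * (A $ i $ r * B $ j $ r * C $ k $ r))" by (rule sum.swap)
    also have "\<dots> = (\<Sum>r\<in>UNIV. A $ i $ r * linform (cc r) g * B $ j $ r)"
      by (rule sum.cong) (simp_all add: linform_def cc_def column_def sum_distrib_left sum_distrib_right algebra_simps)
    also have "\<dots> = (\<Sum>r\<in>UNIV. (A ** (\<chi> i j. if i = j then linform (cc i) g else 0)) $ i $ r * transpose B $ r $ j)"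
      by (simp add: diag_right transpose_def)
    also have "\<dots> = (A ** (\<chi> i j. if i = j then linform (cc i) g else 0) ** transpose B) $ i $ j"
      by (simp only: matrix_matrix_mult_def vec_lambda_beta)
    finally show ?thesis .
  qed
  then show ?thesis by (simp add: vec_eq_iff)
qed

lemma charT: "charpoly T g = det A * (\<Prod>r\<in>UNIV. linform (cc r) g) * det B"
  unfolding charpoly_def T_mat det_diag3 by simp

lemma T_mv: "slicecomb T g *v y = A *v (\<chi> r. linform (cc r) g * (transpose B *v y) $ r)"
proof -
  have "(\<chi> i j. if i = j then linform (cc i) g else 0) *v (transpose B *v y)
      = (\<chi> r. linform (cc r) g * (transpose B *v y) $ r)"
  proof -
    have "(\<Sum>j\<in>UNIV. (if r = j then linform (cc r) g else 0) * (transpose B *v y) $ j)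
        = (\<Sum>j\<in>UNIV. if j = r then linform (cc r) g * (transpose B *v y) $ r else 0)" for r
      by (rule sum.cong) auto
    then show ?thesis by (simp add: vec_eq_iff matrix_vector_mult_def)
  qed
  then show ?thesis unfolding T_mat matrix_vector_mul_assoc[symmetric] by simp
qed

lemma Wt_mv: "slicecomb (Wt t) g *v y = slicecomb T g *v y - t *\<^sub>R (slicecomb Et g *v y)"
  unfolding vec_eq_iff mv_slicecomb Wt_def vector_scaleR_component vector_minus_component
  by (simp add: scaleR_conv_of_real sum_distrib_left sum_subtractf[symmetric] algebra_simps)

lemma Dset_fin: "finite {chordal (L i) (L j) |i j. i \<noteq> j}"
proof (rule finite_subset[of _ "(\<lambda>p. chordal (L (fst p)) (L (snd p))) ` UNIV"])
  show "{chordal (L i) (L j) |i j. i \<noteq> j} \<subseteq> (\<lambda>p. chordal (L (fst p)) (L (snd p))) ` UNIV"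
    by (auto simp: image_iff) (metis fst_conv snd_conv)
qed simp

lemma two_elems: "\<exists>i j::'n. i \<noteq> j"
proof (rule ccontr)
  assume "\<not> (\<exists>i j::'n. i \<noteq> j)"
  then have "card (UNIV::'n set) \<le> Suc 0" by (subst card_le_Suc0_iff_eq) auto
  then show False using R2 by simp
qed

lemma Dset_ne: "{chordal (L i) (L j) |i j. i \<noteq> j} \<noteq> {}"
  using two_elems by blast

lemma delta_le: "i \<noteq> j \<Longrightarrow> delta \<le> chordal (L i) (L j)"
  unfolding delta_def by (rule Min_le[OF Dset_fin]) blast

lemma delta_nonneg: "0 \<le> delta"
proof -
  have "delta \<in> {chordal (L i) (L j) |i j. i \<noteq> j}" unfolding delta_def by (rule Min_in[OF Dset_fin Dset_ne])
  then show ?thesis using chordal_nonneg by auto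
qed

lemma small': "eps < sig * delta / 2"
  using small unfolding eps_def sig_def delta_def Et_def .

lemma eps_nonneg: "0 \<le> eps" unfolding eps_def by (rule spnorm_nonneg)

lemma sig_pos: "sig > 0" and delta_pos: "delta > 0"
proof -
  have "sig \<ge> 0" unfolding sig_def by (simp add: sigma_min_nonneg)
  moreover have "sig * delta > 0" using small' eps_nonneg by linarith
  ultimately show "sig > 0" "delta > 0" using delta_nonneg
    by (auto simp: zero_less_mult_iff)
qed

lemma sA_pos: "sigma_min A > 0" and sB_pos: "sigma_min B > 0"
  using sig_pos sigma_min_nonneg[of A] sigma_min_nonneg[of B] unfolding sig_def
  by (auto simp: zero_less_mult_iff)

lemma mm_nonneg: "0 \<le> mm" using eps_nonneg sig_pos by (simp add: mm_def)
lemma mm_lt: "mm < delta / 2"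
  using small' sig_pos by (simp add: mm_def field_simps)

lemma specT_parts: "\<forall>r. vecK realK (L r)" "\<exists>g. vecK realK g \<and> charpoly T g \<noteq> 0"
  "\<And>g. vecK realK g \<Longrightarrow> charpoly T g = (\<Prod>r\<in>UNIV. linform (L r) g)"
  using specT unfolding is_spectrum_def by auto

lemma detB: "det B \<noteq> 0" and detA: "det A \<noteq> 0"
  using specT_parts(2) charT by auto

lemma invB: "invertible B" using detB invertible_det_nz by blast

lemma L_nz: "L r \<noteq> 0"
proof
  assume "L r = 0"
  obtain g where "vecK realK g" "charpoly T g \<noteq> 0" using specT_parts(2) by blast
  moreover have "linform (L r) g = 0" using \<open>L r = 0\<close> by (simp add: linform_def)
  ultimately show False using specT_parts(3)[of g]
    by (metis UNIV_I finite_class.finite_UNIV prod_zero)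
qed

end


lemma hmono:
  fixes x y :: real assumes "0 \<le> x" "x \<le> y"
  shows "x / sqrt (1 + x^2) \<le> y / sqrt (1 + y^2)"
proof (rule power2_le_imp_le)
  have "x^2 \<le> y^2" using assms by (simp add: power_mono)
  then have "x^2 * (1 + y^2) \<le> y^2 * (1 + x^2)" by (simp add: algebra_simps)
  then have "x^2 / (1 + x^2) \<le> y^2 / (1 + y^2)"
    by (simp add: divide_simps add_pos_nonneg)
  then show "(x / sqrt (1 + x^2))^2 \<le> (y / sqrt (1 + y^2))^2"
    by (simp add: power_divide add_nonneg_nonneg)
  show "0 \<le> y / sqrt (1 + y^2)" using assms by simp
qed

lemma hval:
  fixes rho :: real assumes "0 \<le> rho" "rho < 1"
  shows "(rho / sqrt (1 - rho^2)) / sqrt (1 + (rho / sqrt (1 - rho^2))^2) = rho"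
proof -
  have p: "1 - rho^2 > 0" using assms by (simp add: power_less_one_iff abs_square_less_1)
  have "1 + (rho / sqrt (1 - rho^2))^2 = 1 / (1 - rho^2)"
    using p by (simp add: power_divide field_simps)
  then have "sqrt (1 + (rho / sqrt (1 - rho^2))^2) = 1 / sqrt (1 - rho^2)"
    by (simp add: real_sqrt_divide)
  then show ?thesis using p by simp
qed

lemma hle: "0 \<le> x \<Longrightarrow> x / sqrt (1 + x^2) \<le> (x::real)"
proof -
  assume "0 \<le> x"
  have "1 \<le> sqrt (1 + x^2)" by simp
  then have "x / sqrt (1 + x^2) \<le> x / 1"
    using \<open>0 \<le> x\<close> by (intro divide_left_mono) (auto simp: add_pos_nonneg)
  then show ?thesis by simp
qed

context thm_setup begin

lemma tau_ex: "\<exists>s. wedge (cc s) (L i) = 0"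
proof -
  have "charpoly T (perp (L i)) = (\<Prod>r\<in>UNIV. linform (L r) (perp (L i)))"
    using specT_parts(3) perp_K specT_parts(1) by blast
  also have "\<dots> = 0"
    by (rule prod_zero, simp, rule bexI[of _ i]) (simp_all add: linform_self_perp)
  finally have "(\<Prod>r\<in>UNIV. linform (cc r) (perp (L i))) = 0"
    using detA detB charT by simp
  then obtain s where "linform (cc s) (perp (L i)) = 0" by auto
  then show ?thesis by (auto simp: linform_perp)
qed

definition "tau i = (SOME s. wedge (cc s) (L i) = 0)"

lemma tau_prop: "wedge (cc (tau i)) (L i) = 0"
  unfolding tau_def using tau_ex by (rule someI_ex)

lemma chordal_L: "x \<noteq> 0 \<Longrightarrow> chordal (L i) x = chordal (cc (tau i)) x"
  by (rule chordal_cong[OF L_nz cc_nz]) (use tau_prop[of i] wedge_swap[of "L i" "cc (tau i)"] in auto)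

lemma tau_inj: "inj tau"
proof (rule injI, rule ccontr)
  fix i j assume eq: "tau i = tau j" and ne: "i \<noteq> j"
  have "chordal (L i) (L j) = chordal (cc (tau j)) (L j)" using chordal_L[OF L_nz, of i j] eq by simp
  also have "\<dots> = 0" using tau_prop[of j] by (simp add: chordal_zero_iff cc_nz L_nz)
  finally show False using delta_le[OF ne] delta_pos by simp
qed

lemma tau_surj: "surj tau" using tau_inj by (simp add: finite_UNIV_inj_surj)

lemma sep: assumes "r \<noteq> s" shows "delta \<le> chordal (cc r) (cc s)"
proof -
  have "r \<in> range tau" "s \<in> range tau" using tau_surj by auto
  then obtain i j where ij: "r = tau i" "s = tau j" by blast
  then have "i \<noteq> j" using assms by auto
  have "chordal (cc r) (cc s) = chordal (L i) (cc s)" using chordal_L[OF cc_nz, of i s] ij by simp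
  also have "\<dots> = chordal (cc s) (L i)" by (rule chordal_sym[OF L_nz cc_nz])
  also have "\<dots> = chordal (L j) (L i)" using chordal_L[OF L_nz, of j i] ij by simp
  also have "\<dots> = chordal (L i) (L j)" by (rule chordal_sym[OF L_nz L_nz])
  finally show ?thesis using delta_le[OF \<open>i \<noteq> j\<close>] by simp
qed

lemma lin_cc: "l \<noteq> 0 \<Longrightarrow> cmod (linform (cc s) (perp l)) = chordal (cc s) l * norm l"
  using chordal_wedge[OF cc_nz, of l s] cc_norm[of s] by (simp add: linform_perp)

lemma root_near:
  assumes t: "0 \<le> t" "t \<le> 1" and lK: "vecK realK l" and lnz: "l \<noteq> 0"
    and root: "charpoly (Wt t) (perp l) = 0"
  shows "\<exists>s. chordal (cc s) l \<le> mm"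
proof (rule ccontr)
  assume "\<not> (\<exists>s. chordal (cc s) l \<le> mm)"
  then have H: "mm < chordal (cc s) l" for s by (meson not_le)
  define g where "g = perp l"
  have gK: "vecK realK g" using perp_K[OF lK] by (simp add: g_def)
  have ng: "norm g = norm l" by (simp add: g_def norm_perp)
  have nl: "norm l > 0" using lnz by simp
  obtain y where y: "vecK realK y" "y \<noteq> 0" "slicecomb (Wt t) g *v y = 0"
    using null_vec[OF slicecomb_K[OF WtK gK]] root by (auto simp: charpoly_def g_def)
  have ny: "norm y > 0" using y by simp
  have Tp: "slicecomb T g *v y = t *\<^sub>R (slicecomb Et g *v y)"
    using y(3) Wt_mv[of t g y] by simp
  have up: "norm (slicecomb T g *v y) \<le> eps * norm l * norm y"
  proof -
    have "norm (slicecomb T g *v y) = t * norm (slicecomb Et g *v y)" using Tp t by simp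
    also have "\<dots> \<le> norm (slicecomb Et g *v y)" using t by (simp add: mult_left_le_one_le)
    also have "\<dots> \<le> eps * norm l * norm y" using E_bound[OF EtK gK y(1)] ng by (simp add: eps_def)
    finally show ?thesis .
  qed
  define d where "d = Min (range (\<lambda>s. cmod (linform (cc s) g)))"
  have dle: "d \<le> cmod (linform (cc s) g)" for s unfolding d_def by (rule Min_le) auto
  have dgt: "d > mm * norm l"
    unfolding d_def
  proof (subst Min_gr_iff, simp, simp, clarify)
    fix s show "mm * norm l < cmod (linform (cc s) g)"
      unfolding g_def lin_cc[OF lnz] using H[of s] nl by simp
  qed
  have d0: "d \<ge> 0" using dgt mm_nonneg nl by (smt (verit) mult_nonneg_nonneg norm_ge_zero)
  define u where "u = (\<chi> r. linform (cc r) g * (transpose B *v y) $ r)"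
  have "d * norm (transpose B *v y) \<le> norm u"
    by (rule norm_comp_ge[OF d0]) (simp add: u_def norm_mult mult_right_mono dle)
  moreover have "sigma_min B * norm y \<le> norm (transpose B *v y)" by (rule sigma_min_transpose[OF invB])
  ultimately have "d * (sigma_min B * norm y) \<le> norm u"
    using d0 by (meson mult_left_mono order_trans)
  then have "sigma_min A * (d * (sigma_min B * norm y)) \<le> sigma_min A * norm u"
    using sA_pos by simp
  also have "\<dots> \<le> norm (slicecomb T g *v y)"
    unfolding T_mv u_def[symmetric] by (rule sigma_min_le)
  also have "\<dots> \<le> eps * norm l * norm y" by (rule up)
  finally have "sig * d * norm y \<le> eps * norm l * norm y" by (simp add: sig_def algebra_simps)
  then have "sig * d \<le> eps * norm l" using ny by simp
  then have "d \<le> mm * norm l" using sig_pos by (simp add: mm_def field_simps)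
  then show False using dgt by simp
qed

lemma outside_nonroot:
  assumes t: "0 \<le> t" "t \<le> 1" and lK: "vecK realK l" and lnz: "l \<noteq> 0"
    and far: "\<And>s. mm < chordal (cc s) l"
  shows "charpoly (Wt t) (perp l) \<noteq> 0"
  using root_near[OF t lK lnz] far by (meson not_le)

end


lemma cont_det:
  fixes M :: "'a::topological_space \<Rightarrow> complex^'n^'n"
  assumes "\<And>i j. continuous_on S (\<lambda>x. M x $ i $ j)"
  shows "continuous_on S (\<lambda>x. det (M x))"
  unfolding det_def by (intro continuous_intros assms)

lemma hol_det:
  fixes M :: "complex \<Rightarrow> complex^'n^'n"
  assumes "\<And>i j. (\<lambda>x. M x $ i $ j) holomorphic_on S"
  shows "(\<lambda>x. det (M x)) holomorphic_on S"
  unfolding det_def by (intro holomorphic_intros assms)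

lemma nz_sign:
  fixes f :: "real \<Rightarrow> real"
  assumes ab: "a \<le> b" and cf: "continuous_on {a..b} f" and nz: "\<And>x. a \<le> x \<Longrightarrow> x \<le> b \<Longrightarrow> f x \<noteq> 0"
  shows "f a * f b > 0"
proof (rule ccontr)
  assume "\<not> f a * f b > 0"
  then have le: "f a * f b \<le> 0" by simp
  have fa: "f a \<noteq> 0" and fb: "f b \<noteq> 0" using nz ab by auto
  show False
  proof (cases "f a < 0")
    case True
    then have "f b \<ge> 0" using le by (smt (verit) mult_neg_neg)
    then obtain x where "a \<le> x" "x \<le> b" "f x = 0" using IVT'[of f a 0 b] True ab cf by auto
    then show False using nz by blast
  next
    case False
    then have "f a > 0" using fa by simp
    then have "f b \<le> 0" using le by (smt (verit) mult_pos_pos)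
    then obtain x where "a \<le> x" "x \<le> b" "f x = 0" using IVT2'[of f b 0 a] \<open>f a > 0\<close> ab cf by auto
    then show False using nz by blast
  qed
qed

context thm_setup begin

definition "rho = delta / 2"
definition "u0 = rho / sqrt (1 - rho^2)"
definition "pt r z = cc r + z *s wdir (cc r)"
definition "Fz r t z = charpoly (Wt t) (perp (pt r z))"

lemma delta_le1: "delta \<le> 1"
proof -
  obtain i j :: 'n where "i \<noteq> j" using two_elems by blast
  then show ?thesis using delta_le[of i j] chordal_le1[of "L i" "L j"] by simp
qed

lemma rho_facts: "0 < rho" "rho < 1" "mm < rho" "delta = 2 * rho"
  using delta_pos delta_le1 mm_lt by (auto simp: rho_def)

lemma u0_pos: "0 < u0"
proof -
  have "1 - rho^2 > 0" using rho_facts by (simp add: power_less_one_iff abs_square_less_1)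
  then show ?thesis using rho_facts by (simp add: u0_def)
qed

lemma pt_nz: "pt r z \<noteq> 0" unfolding pt_def by (rule param_nz[OF cc_norm])

lemma pt_in: "cmod z \<le> u0 \<Longrightarrow> chordal (cc r) (pt r z) \<le> rho"
  unfolding pt_def chordal_param[OF cc_norm]
  using hmono[of "cmod z" u0] hval[of rho] rho_facts by (simp add: u0_def)

lemma pt_bd: "cmod z = u0 \<Longrightarrow> chordal (cc r) (pt r z) = rho"
  unfolding pt_def chordal_param[OF cc_norm]
  using hval[of rho] rho_facts by (simp add: u0_def)

lemma far_other:
  assumes "s \<noteq> r" "l \<noteq> 0" "chordal (cc r) l \<le> rho"
  shows "rho \<le> chordal (cc s) l"
proof -
  have "chordal (cc s) (cc r) \<le> chordal l (cc r) + chordal (cc s) l"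
    by (rule chordal_tri[OF cc_nz cc_nz assms(2)])
  moreover have "chordal l (cc r) = chordal (cc r) l" by (rule chordal_sym[OF assms(2) cc_nz])
  moreover have "delta \<le> chordal (cc s) (cc r)" using sep assms(1) by blast
  ultimately show ?thesis using assms(3) rho_facts by linarith
qed

lemma pt_far: assumes "cmod z = u0" shows "mm < chordal (cc s) (pt r z)"
proof (cases "s = r")
  case True then show ?thesis using pt_bd[OF assms] rho_facts by simp
next
  case False
  then have "rho \<le> chordal (cc s) (pt r z)"
    using far_other[OF False pt_nz] pt_bd[OF assms] by simp
  then show ?thesis using rho_facts by simp
qed

lemma ident:
  assumes lK: "vecK realK l" and lnz: "l \<noteq> 0" and root: "charpoly W (perp l) = 0"
    and near: "chordal (cc r) l \<le> rho"
  shows "chordal (cc r) l \<le> mm"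
proof -
  obtain s where s: "chordal (cc s) l \<le> mm"
    using root_near[of 1 l] lK lnz root Wt1 by auto
  show ?thesis
  proof (cases "s = r")
    case True then show ?thesis using s by simp
  next
    case False
    then have "rho \<le> chordal (cc s) l" using far_other lnz near by blast
    then show ?thesis using s rho_facts by simp
  qed
qed

lemma wdir_K: "vecK realK x \<Longrightarrow> vecK realK (wdir x)"
  unfolding vecK_def forall_2 by (auto intro: inK_simps)

lemma pt_K: "vecK realK (pt r (complex_of_real u))"
  using cc_K[of r] wdir_K[OF cc_K[of r]]
  unfolding pt_def vecK_def by (auto intro!: inK_simps)

lemma Fz_entry: "slicecomb (Wt t) (perp (pt r z)) $ i $ j =
   - (cc r $ 2 + z * wdir (cc r) $ 2) * (T i j 1 - complex_of_real t * Et i j 1)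
   + (cc r $ 1 + z * wdir (cc r) $ 1) * (T i j 2 - complex_of_real t * Et i j 2)"
  by (simp add: slicecomb_nth sum_2 pt_def Wt_def)

lemma Fz_cont_u: "continuous_on S (\<lambda>u. Fz r t (complex_of_real u))"
  unfolding Fz_def charpoly_def
  by (rule cont_det, unfold Fz_entry) (intro continuous_intros)

lemma Fz_cont_t: "continuous_on S (\<lambda>t. Fz r t z)"
  unfolding Fz_def charpoly_def
  by (rule cont_det, unfold Fz_entry) (intro continuous_intros)

lemma Fz_cont_pair: "continuous_on S (\<lambda>p. Fz r (fst p) (snd p))"
  unfolding Fz_def charpoly_def
  by (rule cont_det, unfold Fz_entry) (intro continuous_intros)

lemma Fz_hol: "(\<lambda>z. Fz r t z) holomorphic_on S"
  unfolding Fz_def charpoly_def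
  by (rule hol_det, unfold Fz_entry) (intro holomorphic_intros)

lemma Fz_K: "inK realK (Fz r t (complex_of_real u))"
  unfolding Fz_def charpoly_def
  by (rule det_inK, rule slicecomb_K[OF WtK perp_K[OF pt_K]])

lemma Fz0: "Fz r 0 z = det A * det B * (- z) * (\<Prod>s\<in>UNIV-{r}. - wedge (cc s) (pt r z))"
proof -
  have "Fz r 0 z = det A * (\<Prod>s\<in>UNIV. linform (cc s) (perp (pt r z))) * det B"
    unfolding Fz_def Wt0 charT ..
  also have "(\<Prod>s\<in>UNIV. linform (cc s) (perp (pt r z))) =
      linform (cc r) (perp (pt r z)) * (\<Prod>s\<in>UNIV-{r}. linform (cc s) (perp (pt r z)))"
    by (rule prod.remove) auto
  also have "linform (cc r) (perp (pt r z)) = - z"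
    unfolding linform_perp pt_def wedge_param[OF cc_norm] ..
  finally show ?thesis by (simp add: linform_perp algebra_simps)
qed

end


context thm_setup begin

lemma root_real:
  assumes rK: realK
  shows "\<exists>l. vecK realK l \<and> l \<noteq> 0 \<and> charpoly W (perp l) = 0 \<and> chordal (cc r) l \<le> mm"
proof -
  define G where "G t u = Re (Fz r t (complex_of_real u))" for t u
  have FG: "Fz r t (complex_of_real u) = complex_of_real (G t u)" for t u
    using Fz_K[of r t u] rK by (simp add: G_def inK_def)
  define h where "h s u = Re (- wedge (cc s) (pt r (complex_of_real u)))" for s u
  have hreal: "- wedge (cc s) (pt r (complex_of_real u)) = complex_of_real (h s u)" for s u
  proof -
    have "vecK realK (cc s)" "vecK realK (pt r (complex_of_real u))" using cc_K pt_K by auto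
    then have "inK realK (- wedge (cc s) (pt r (complex_of_real u)))"
      unfolding vecK_def wedge_def by (auto intro!: inK_simps)
    then show ?thesis using rK by (simp add: h_def inK_def)
  qed
  obtain D where D: "det A * det B = complex_of_real D"
    using det_inK[of realK A] det_inK[of realK B] AK BK rK
    by (metis inK_def inK_simps(3) matK_def of_real_Re)
  have D0: "D \<noteq> 0" using D detA detB by auto
  have G0: "G 0 u = D * (- u) * (\<Prod>s\<in>UNIV-{r}. h s u)" for u
  proof -
    have fz: "Fz r 0 (complex_of_real u) = complex_of_real (D * (- u) * (\<Prod>s\<in>UNIV-{r}. h s u))"
      unfolding Fz0 D hreal by (simp add: of_real_prod)
    show ?thesis unfolding G_def fz Re_complex_of_real ..
  qed
  have hcont: "continuous_on S (h s)" for s S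
    unfolding h_def pt_def wedge_def vector_add_component vector_smult_component by (intro continuous_intros)
  have hnz: "h s u \<noteq> 0" if "s \<noteq> r" "\<bar>u\<bar> \<le> u0" for s u
  proof
    assume "h s u = 0"
    then have w: "wedge (cc s) (pt r (complex_of_real u)) = 0" using hreal[of s u] by simp
    have "chordal (cc r) (pt r (complex_of_real u)) \<le> rho" using pt_in that by simp
    then have "rho \<le> chordal (cc s) (pt r (complex_of_real u))" using far_other[OF that(1) pt_nz] by simp
    moreover have "chordal (cc s) (pt r (complex_of_real u)) = 0"
      using w by (simp add: chordal_zero_iff[OF cc_nz pt_nz])
    ultimately show False using rho_facts by simp
  qed
  have hsign: "h s (- u0) * h s u0 > 0" if "s \<in> UNIV - {r}" for s
    by (rule nz_sign) (use u0_pos hcont hnz that in auto)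
  have P: "(\<Prod>s\<in>UNIV-{r}. h s (- u0)) * (\<Prod>s\<in>UNIV-{r}. h s u0) > 0"
    unfolding prod.distrib[symmetric] by (rule prod_pos) (use hsign in auto)
  have G0s: "G 0 (- u0) * G 0 u0 < 0"
  proof -
    have "G 0 (- u0) * G 0 u0 = - (D^2 * u0^2 * ((\<Prod>s\<in>UNIV-{r}. h s (- u0)) * (\<Prod>s\<in>UNIV-{r}. h s u0)))"
      unfolding G0 by (simp add: power2_eq_square algebra_simps)
    moreover have "D^2 * u0^2 * ((\<Prod>s\<in>UNIV-{r}. h s (- u0)) * (\<Prod>s\<in>UNIV-{r}. h s u0)) > 0"
      using D0 u0_pos P by simp
    ultimately show ?thesis by simp
  qed
  have Gcont_t: "continuous_on S (\<lambda>t. G t u)" for S u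
    unfolding G_def by (intro continuous_intros Fz_cont_t)
  have Gcont_u: "continuous_on S (G t)" for S t
    unfolding G_def by (intro continuous_intros Fz_cont_u)
  have tside: "G 0 u * G 1 u > 0" if "\<bar>u\<bar> = u0" for u
  proof (rule nz_sign[of 0 1 "\<lambda>t. G t u"])
    show "continuous_on {0..1} (\<lambda>t. G t u)" by (rule Gcont_t)
    fix t :: real assume t: "0 \<le> t" "t \<le> 1"
    have "charpoly (Wt t) (perp (pt r (complex_of_real u))) \<noteq> 0"
      by (rule outside_nonroot[OF t pt_K pt_nz]) (use pt_far that in auto)
    then show "G t u \<noteq> 0" using FG[of t u] by (simp add: Fz_def)
  qed simp
  have a: "G 0 (- u0) * G 1 (- u0) > 0" "G 0 u0 * G 1 u0 > 0"
    using tside u0_pos by auto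
  have G1s: "G 1 (- u0) * G 1 u0 < 0"
  proof -
    have "(G 0 (- u0) * G 0 u0) * (G 1 (- u0) * G 1 u0) = (G 0 (- u0) * G 1 (- u0)) * (G 0 u0 * G 1 u0)"
      by (simp add: algebra_simps)
    also have "\<dots> > 0" using a by simp
    finally have XY: "(G 0 (- u0) * G 0 u0) * (G 1 (- u0) * G 1 u0) > 0" .
    show ?thesis
    proof (rule ccontr)
      assume "\<not> G 1 (- u0) * G 1 u0 < 0"
      then have "G 1 (- u0) * G 1 u0 \<ge> 0" by simp
      then have "(G 0 (- u0) * G 0 u0) * (G 1 (- u0) * G 1 u0) \<le> 0"
        using G0s by (metis less_imp_le mult_nonpos_nonneg)
      then show False using XY by simp
    qed
  qed
  obtain u where u: "- u0 \<le> u" "u \<le> u0" "G 1 u = 0"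
  proof (rule ccontr)
    assume "\<not> thesis"
    then have "\<And>x. - u0 \<le> x \<Longrightarrow> x \<le> u0 \<Longrightarrow> G 1 x \<noteq> 0" using that by blast
    then have "G 1 (- u0) * G 1 u0 > 0" using u0_pos Gcont_u by (intro nz_sign) auto
    then show False using G1s by simp
  qed
  define l where "l = pt r (complex_of_real u)"
  have root: "charpoly W (perp l) = 0" using FG[of 1 u] u(3) by (simp add: Fz_def Wt1 l_def)
  have "chordal (cc r) l \<le> rho" unfolding l_def by (rule pt_in) (use u in auto)
  then have "chordal (cc r) l \<le> mm" using ident pt_K pt_nz root l_def by blast
  then show ?thesis using pt_K pt_nz root l_def by blast
qed

end


context thm_setup begin

lemma root_cplx:
  assumes rK: "\<not> realK"
  shows "\<exists>l. vecK realK l \<and> l \<noteq> 0 \<and> charpoly W (perp l) = 0 \<and> chordal (cc r) l \<le> mm"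
proof -
  have allK: "vecK realK x" for x :: "complex^2" using rK by (simp add: vecK_def inK_def)
  have onsph: "Fz r t z \<noteq> 0" if "0 \<le> t" "t \<le> 1" "cmod z = u0" for t z
    unfolding Fz_def by (rule outside_nonroot[OF that(1,2) allK pt_nz]) (use pt_far that in auto)
  define F where "F p = Fz r (fst p) (snd p)" for p
  have Fc: "continuous_on S F" for S unfolding F_def by (rule Fz_cont_pair)
  define Ssp where "Ssp = {0..1::real} \<times> sphere (0::complex) u0"
  have cSsp: "compact Ssp" unfolding Ssp_def by (intro compact_Times compact_Icc compact_sphere)
  have neSsp: "Ssp \<noteq> {}" unfolding Ssp_def using u0_pos
    by (auto intro!: exI[of _ "(0, complex_of_real u0)"])
  obtain p0 where p0: "p0 \<in> Ssp" "\<forall>q\<in>Ssp. cmod (F p0) \<le> cmod (F q)"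
  proof -
    have "continuous_on Ssp (\<lambda>p. cmod (F p))" by (rule continuous_on_norm[OF Fc])
    from continuous_attains_inf[OF cSsp neSsp this] show ?thesis using that by blast
  qed
  define mu where "mu = cmod (F p0)"
  have mu_pos: "mu > 0"
    using p0(1) onsph unfolding mu_def F_def Ssp_def by (auto simp: dist_norm)
  have mu_le: "mu \<le> cmod (Fz r t z)" if "0 \<le> t" "t \<le> 1" "cmod z = u0" for t z
    using p0(2) that unfolding mu_def Ssp_def F_def by (auto simp: dist_norm)
  define K where "K = {0..1::real} \<times> cball (0::complex) u0"
  have "uniformly_continuous_on K F"
    by (rule compact_uniformly_continuous[OF Fc]) (auto simp: K_def intro!: compact_Times)
  then obtain eta where eta: "eta > 0"
    "\<And>x x'. x \<in> K \<Longrightarrow> x' \<in> K \<Longrightarrow> dist x' x < eta \<Longrightarrow> dist (F x') (F x) < mu / 2"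
    unfolding uniformly_continuous_on_def using mu_pos by (metis half_gt_zero)
  obtain N :: nat where N: "N > 0" "inverse (real N) < eta" using ex_inverse_of_nat_less[OF eta(1)] by blast
  have step: "\<exists>z. cmod z < u0 \<and> Fz r (real k / real N) z = 0" if "k \<le> N" for k
    using that
  proof (induction k)
    case 0
    have "Fz r 0 0 = 0" by (simp add: Fz0)
    then show ?case using u0_pos by (intro exI[of _ 0]) simp
  next
    case (Suc k)
    then obtain z0 where z0: "cmod z0 < u0" "Fz r (real k / real N) z0 = 0" by auto
    define t where "t = real k / real N"
    define t' where "t' = real (Suc k) / real N"
    have t01: "0 \<le> t" "t \<le> 1" "0 \<le> t'" "t' \<le> 1" using Suc.prems N by (auto simp: t_def t'_def)
    have inK: "(t, z0) \<in> K" "(t', z0) \<in> K" using t01 z0 by (auto simp: K_def)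
    have "dist (t', z0) (t, z0) = dist t' t" by (simp add: dist_Pair_Pair)
    also have "\<dots> = inverse (real N)"
      using N by (simp add: t_def t'_def dist_real_def diff_divide_distrib[symmetric] divide_inverse algebra_simps)
    finally have "dist (t', z0) (t, z0) = inverse (real N)" .
    then have "dist (F (t', z0)) (F (t, z0)) < mu / 2" using eta(2)[OF inK(1) inK(2)] N by simp
    then have small1: "cmod (Fz r t' z0) < mu / 2" using z0 by (simp add: F_def t_def dist_norm)
    have "\<exists>z\<in>cball 0 u0. Fz r t' z = 0"
    proof (rule ccontr)
      assume "\<not> (\<exists>z\<in>cball 0 u0. Fz r t' z = 0)"
      then have nz: "\<And>z. z \<in> cball 0 u0 \<Longrightarrow> Fz r t' z \<noteq> 0" by blast
      have "norm (inverse (Fz r t' z0)) \<le> inverse mu"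
      proof (rule maximum_modulus_frontier[of "\<lambda>z. inverse (Fz r t' z)" "cball 0 u0"])
        show "(\<lambda>z. inverse (Fz r t' z)) holomorphic_on interior (cball 0 u0)"
          using nz by (auto intro!: holomorphic_on_inverse Fz_hol)
        have "continuous_on (cball 0 u0) (\<lambda>z. Fz r t' z)"
          by (rule holomorphic_on_imp_continuous_on[OF Fz_hol])
        then show "continuous_on (closure (cball 0 u0)) (\<lambda>z. inverse (Fz r t' z))"
          using nz by (auto intro!: continuous_on_inverse)
        show "bounded (cball (0::complex) u0)" by simp
        fix z :: complex assume "z \<in> frontier (cball 0 u0)"
        then have "cmod z = u0" using u0_pos by (simp add: dist_norm)
        then have "mu \<le> cmod (Fz r t' z)" using mu_le t01 by blast
        then show "norm (inverse (Fz r t' z)) \<le> inverse mu"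
          using mu_pos by (simp add: norm_inverse le_imp_inverse_le)
      next
        show "z0 \<in> cball 0 u0" using z0 by (simp add: dist_norm)
      qed
      then have iv: "inverse (cmod (Fz r t' z0)) \<le> inverse mu" by (simp only: norm_inverse)
      have "z0 \<in> cball 0 u0" using z0 by (simp add: dist_norm)
      then have "cmod (Fz r t' z0) > 0" using nz by simp
      then have "mu \<le> cmod (Fz r t' z0)" using iv mu_pos inverse_le_iff_le by blast
      then show False using small1 mu_pos by simp
    qed
    then obtain z where z: "cmod z \<le> u0" "Fz r t' z = 0" by (auto simp: dist_norm)
    have "cmod z \<noteq> u0" using onsph[of t' z] t01 z by auto
    then have "cmod z < u0" using z(1) by simp
    then show ?case using z(2) unfolding t'_def by blast
  qed
  obtain z where z: "cmod z < u0" "Fz r 1 z = 0" using step[of N] N by auto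
  define l where "l = pt r z"
  have root: "charpoly W (perp l) = 0" using z by (simp add: Fz_def Wt1 l_def)
  have "chordal (cc r) l \<le> rho" unfolding l_def by (rule pt_in) (use z in auto)
  then have "chordal (cc r) l \<le> mm" using ident allK pt_nz root l_def by blast
  then show ?thesis using allK pt_nz root l_def by blast
qed

lemma root_ex: "\<exists>l. vecK realK l \<and> l \<noteq> 0 \<and> charpoly W (perp l) = 0 \<and> chordal (cc r) l \<le> mm"
  using root_real root_cplx by blast

end


lemma mv_smult: "(M::complex^'n^'m) *v (c *s x) = c *s (M *v x)"
  by (simp add: vec_eq_iff matrix_vector_mult_def sum_distrib_left algebra_simps)

lemma mv_sum: "(M::complex^'n^'m) *v (sum f S) = sum (\<lambda>r. M *v f r) S"
proof -
  have "(\<Sum>j\<in>UNIV. M$i$j * (\<Sum>r\<in>S. f r $ j)) = (\<Sum>r\<in>S. \<Sum>j\<in>UNIV. M$i$j * f r $ j)" for i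
    by (simp add: sum_distrib_left sum.swap[of _ S])
  then show ?thesis by (simp add: vec_eq_iff matrix_vector_mult_def sum_component)
qed

lemma mv_neg: "(M::complex^'n^'m) *v (- x) = - (M *v x)"
  by (simp add: vec_eq_iff matrix_vector_mult_def sum_negf)

lemma smult_sum: "(c::complex) *s sum f S = sum (\<lambda>r. c *s f r) S"
  by (simp add: vec_eq_iff sum_component sum_distrib_left)

lemma smult_eq0: "(c::complex) *s (x::complex^'n) = 0 \<longleftrightarrow> c = 0 \<or> x = 0"
  using norm_smult[of c x] by (metis mult_eq_0_iff norm_eq_zero)

lemma pencil_alg:
  fixes l1 l2 g1 g2 v1 v2 :: complex
  assumes "- l2 * v1 + l1 * v2 = 0" "l1 * g1 + l2 * g2 \<noteq> 0"
  shows "v1 = l1 * ((g1 * v1 + g2 * v2) / (l1*g1 + l2*g2))" "v2 = l2 * ((g1 * v1 + g2 * v2) / (l1*g1 + l2*g2))"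
proof -
  have "v1 * (l1*g1 + l2*g2) = l1 * (g1 * v1 + g2 * v2)" using assms(1) by algebra
  then show "v1 = l1 * ((g1 * v1 + g2 * v2) / (l1*g1 + l2*g2))" using assms(2) by (simp add: field_simps)
  have "v2 * (l1*g1 + l2*g2) = l2 * (g1 * v1 + g2 * v2)" using assms(1) by algebra
  then show "v2 = l2 * ((g1 * v1 + g2 * v2) / (l1*g1 + l2*g2))" using assms(2) by (simp add: field_simps)
qed

lemma linform2: "linform (l::complex^2) g = l$1 * g$1 + l$2 * g$2"
  by (simp add: linform_def sum_2)

lemma wedge_lin_ident: "linform l e * linform m g - linform m e * linform l g = wedge l m * wedge e g"
  by (simp add: linform2 wedge_def algebra_simps)

lemma wedge_trans0:
  assumes "u \<noteq> 0" "wedge u v = 0" "wedge u w = 0"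
  shows "wedge v w = 0"
proof -
  have "wedge v w *s u = wedge u w *s v + wedge v u *s w" by (rule wedge_ident)
  also have "\<dots> = 0" using assms wedge_swap[of u v] by simp
  finally show ?thesis using assms(1) smult_eq0 by blast
qed

context thm_setup begin

definition "lr r = (SOME l. vecK realK l \<and> l \<noteq> 0 \<and> charpoly W (perp l) = 0 \<and> chordal (cc r) l \<le> mm)"

lemma lr: "vecK realK (lr r)" "lr r \<noteq> 0" "charpoly W (perp (lr r)) = 0" "chordal (cc r) (lr r) \<le> mm"
  using someI_ex[OF root_ex[of r]] unfolding lr_def[symmetric] by auto

lemma chordal_cong2:
  assumes "x \<noteq> 0" "v \<noteq> 0" "v' \<noteq> 0" "wedge v v' = 0"
  shows "chordal x v = chordal x v'"
  using chordal_sym[OF assms(1) assms(2)] chordal_sym[OF assms(1) assms(3)] chordal_cong[OF assms(2,3,1,4)]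
  by simp

lemma lr_distinct: assumes "r \<noteq> s" shows "wedge (lr r) (lr s) \<noteq> 0"
proof
  assume w: "wedge (lr r) (lr s) = 0"
  have "chordal (cc r) (lr s) = chordal (cc r) (lr r)"
    using chordal_cong2[OF cc_nz lr(2) lr(2) w] by simp
  then have a: "chordal (cc r) (lr s) \<le> mm" using lr(4) by simp
  have "chordal (cc r) (cc s) \<le> chordal (lr s) (cc s) + chordal (cc r) (lr s)"
    by (rule chordal_tri[OF cc_nz cc_nz lr(2)])
  moreover have "chordal (lr s) (cc s) = chordal (cc s) (lr s)" by (rule chordal_sym[OF lr(2) cc_nz])
  moreover have "delta \<le> chordal (cc r) (cc s)" using sep[OF assms] .
  ultimately show False using a lr(4)[of s] mm_lt by linarith
qed

definition "r0 = (undefined::'n)"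
definition "lst = pt r0 (complex_of_real u0)"
definition "gs = perp lst"

lemma lst_far: "mm < chordal (cc s) lst"
  unfolding lst_def by (rule pt_far) (use u0_pos in simp)

lemma gsK: "vecK realK gs" unfolding gs_def lst_def by (rule perp_K[OF pt_K])
lemma gs_nz: "gs \<noteq> 0" unfolding gs_def lst_def by (rule perp_nz[OF pt_nz])

lemma charW_gs: "charpoly W gs \<noteq> 0"
  using outside_nonroot[of 1 lst] pt_K pt_nz lst_far unfolding gs_def lst_def Wt1 by auto

definition "lam r = linform (lr r) gs"

lemma lam_nz: "lam r \<noteq> 0"
proof
  assume "lam r = 0"
  then have w: "wedge (lr r) lst = 0" unfolding lam_def gs_def linform_perp by simp
  have "chordal (cc r) lst = chordal (cc r) (lr r)"
    using chordal_cong2[OF cc_nz lr(2) _ w] pt_nz unfolding lst_def by simp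
  then show False using lst_far[of r] lr(4)[of r] by simp
qed

lemma lamK: "inK realK (lam r)"
  unfolding lam_def linform2 using lr(1)[of r] gsK by (auto simp: vecK_def intro!: inK_simps)

definition "NN = slicecomb W gs"
definition "ee = wdir gs"
definition "mu r = linform (lr r) ee / lam r"

lemma wedge_ee: "wedge ee gs \<noteq> 0"
proof -
  have "wedge ee gs = - complex_of_real ((norm gs)^2)"
    unfolding ee_def wedge_def norm2_sq of_real_add complex_norm_square
    by (simp add: algebra_simps)
  then show ?thesis using gs_nz by simp
qed

lemma mu_inj: assumes "mu r = mu s" shows "r = s"
proof (rule ccontr)
  assume ne: "r \<noteq> s"
  have "linform (lr r) ee * lam s = linform (lr s) ee * lam r"
    using assms lam_nz[of r] lam_nz[of s] unfolding mu_def by (simp add: field_simps)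
  then have "wedge (lr r) (lr s) * wedge ee gs = 0"
    using wedge_lin_ident[of "lr r" ee "lr s" gs] unfolding lam_def by simp
  then show False using lr_distinct[OF ne] wedge_ee by simp
qed

definition "yv r = (SOME y. vecK realK y \<and> y \<noteq> 0 \<and> slicecomb W (perp (lr r)) *v y = 0)"

lemma yv: "vecK realK (yv r)" "yv r \<noteq> 0" "slicecomb W (perp (lr r)) *v yv r = 0"
proof -
  have "\<exists>y. vecK realK y \<and> y \<noteq> 0 \<and> slicecomb W (perp (lr r)) *v y = 0"
    by (rule null_vec[OF slicecomb_K[OF WK perp_K[OF lr(1)]]]) (use lr(3) in \<open>simp add: charpoly_def\<close>)
  from someI_ex[OF this] show "vecK realK (yv r)" "yv r \<noteq> 0" "slicecomb W (perp (lr r)) *v yv r = 0"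
    unfolding yv_def[symmetric] by auto
qed

definition "Vk k y = (\<chi> i. \<Sum>j\<in>UNIV. W i j k * y$j)"

lemma mvW: "(slicecomb W g *v y) $ i = g$1 * Vk 1 y $ i + g$2 * Vk 2 y $ i"
  by (simp add: mv_slicecomb Vk_def sum_2 sum.distrib sum_distrib_left algebra_simps)

definition "av r = (\<chi> i. (gs$1 * Vk 1 (yv r) $ i + gs$2 * Vk 2 (yv r) $ i) / lam r)"

lemma Vk_a: "Vk 1 (yv r) $ i = lr r $ 1 * av r $ i" "Vk 2 (yv r) $ i = lr r $ 2 * av r $ i"
proof -
  have rel: "- lr r $ 2 * Vk 1 (yv r) $ i + lr r $ 1 * Vk 2 (yv r) $ i = 0"
    using yv(3)[of r] mvW[of "perp (lr r)" "yv r" i] by (simp add: vec_eq_iff)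
  have l: "lr r $ 1 * gs $ 1 + lr r $ 2 * gs $ 2 \<noteq> 0" using lam_nz[of r] by (simp add: lam_def linform2)
  show "Vk 1 (yv r) $ i = lr r $ 1 * av r $ i" "Vk 2 (yv r) $ i = lr r $ 2 * av r $ i"
    using pencil_alg[OF rel l] by (simp_all add: av_def lam_def linform2)
qed

lemma W_y: "slicecomb W g *v yv r = linform (lr r) g *s av r"
  by (simp add: vec_eq_iff mvW Vk_a linform2 algebra_simps)

lemma avK: "vecK realK (av r)"
  unfolding av_def vecK_def Vk_def using WK yv(1)[of r] gsK lamK[of r]
  by (auto simp: tensorK_def vecK_def intro!: inK_simps inK_sum)

lemma NN_inj: "inj ((*v) NN)"
  using det_nz_iff_inj_gen[OF matrix_vector_mul_linear_gen[of NN]] charW_gs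
  by (simp add: NN_def charpoly_def)

lemma P_y: "slicecomb W ee *v yv r = mu r *s (NN *v yv r)"
  unfolding NN_def W_y mu_def lam_def[symmetric] using lam_nz[of r]
  by (simp add: vec_eq_iff)

lemma indep: "finite S \<Longrightarrow> (\<Sum>r\<in>S. al r *s yv r) = 0 \<Longrightarrow> \<forall>r\<in>S. al r = 0"
proof (induction S arbitrary: al rule: finite_induct)
  case empty then show ?case by simp
next
  case (insert s S)
  define v where "v = (\<Sum>r\<in>S. al r *s yv r)"
  have "al s *s yv s + v = 0" using insert.prems insert.hyps unfolding v_def by simp
  then have v: "v = - (al s *s yv s)" by (metis add_diff_cancel_left' diff_0)
  define al' where "al' r = al r * (mu s - mu r)" for r
  have "NN *v (\<Sum>r\<in>S. al' r *s yv r) = mu s *s (NN *v v) - slicecomb W ee *v v"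
    unfolding v_def mv_sum mv_smult P_y al'_def smult_sum vec_eq_iff
    by (simp add: sum_component sum_subtractf sum_distrib_left algebra_simps)
  also have "\<dots> = 0"
    unfolding v mv_smult mv_neg P_y
    by (simp add: vec_eq_iff algebra_simps)
  finally have "(\<Sum>r\<in>S. al' r *s yv r) = 0"
    using NN_inj by (metis (no_types) injD matrix_vector_mult_0_right)
  then have "\<forall>r\<in>S. al' r = 0" by (rule insert.IH)
  then have z: "\<forall>r\<in>S. al r = 0"
    using insert.hyps(2) mu_inj unfolding al'_def by fastforce
  then have "v = 0" unfolding v_def by simp
  then have "al s = 0" using v yv(2)[of s] smult_eq0 by (metis neg_equal_0_iff_equal)
  then show ?case using z by simp
qed

end


lemma wedge_smult_l: "wedge (c *s u) v = c * wedge u v" by (simp add: wedge_def algebra_simps)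
lemma wedge_smult_r: "wedge u (c *s v) = c * wedge u v" by (simp add: wedge_def algebra_simps)
lemma prop_wedge: "proportional u v \<Longrightarrow> wedge u v = 0"
  unfolding proportional_def by (auto simp: wedge_smult_l wedge_smult_r wedge_def)
lemma linform_smult: "linform (c *s l) g = c * linform l g"
  by (simp add: linform_def sum_distrib_left algebra_simps)

context thm_setup begin

definition "YY = (\<chi> j r. yv r $ j)"

lemma YY_mv: "YY *v x = (\<Sum>r\<in>UNIV. x$r *s yv r)"
  by (simp add: vec_eq_iff matrix_vector_mult_def sum_component YY_def mult.commute)

lemma YY_inj: "inj ((*v) YY)"
proof (rule injI)
  fix a b assume "YY *v a = YY *v b"
  then have "YY *v (a - b) = 0" by (simp add: matrix_vector_mult_diff_distrib)
  then have "(\<Sum>r\<in>UNIV. (a - b)$r *s yv r) = 0" by (simp add: YY_mv)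
  then have "\<forall>r\<in>UNIV. (a - b)$r = 0" by (intro indep) simp_all
  then show "a = b" by (simp add: vec_eq_iff)
qed

lemma YY_invertible: "invertible YY"
proof -
  have "det YY \<noteq> 0" using det_nz_iff_inj_gen[OF matrix_vector_mul_linear_gen[of YY]] YY_inj by simp
  then show ?thesis by (simp add: invertible_det_nz)
qed

definition "Yi = matrix_inv YY"

lemma Yi: "YY ** Yi = mat 1" "Yi ** YY = mat 1"
  using someI_ex[OF YY_invertible[unfolded invertible_def]] unfolding Yi_def matrix_inv_def by auto

lemma YiK: "inK realK (Yi $ i $ j)"
proof (cases realK)
  case False then show ?thesis by (simp add: inK_def)
next
  case True
  define Yc where "Yc = (\<chi> i j. cnj (Yi $ i $ j))"
  have YYr: "cnj (YY $ i $ j) = YY $ i $ j" for i j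
    using yv(1)[of j] True unfolding YY_def vecK_def inK_def Reals_cnj_iff by simp
  have "YY ** Yc = mat 1"
  proof -
    have "(YY ** Yc) $ i $ j = cnj ((YY ** Yi) $ i $ j)" for i j
      by (simp add: matrix_matrix_mult_def Yc_def YYr)
    then show ?thesis using Yi(1) by (simp add: vec_eq_iff mat_def)
  qed
  then have "Yc = Yi"
    by (metis Yi(2) matrix_mul_assoc matrix_mul_lid matrix_mul_rid)
  then have "cnj (Yi $ i $ j) = Yi $ i $ j" unfolding Yc_def by (metis vec_lambda_beta)
  then show ?thesis unfolding inK_def Reals_cnj_iff by blast
qed

lemma Vk_gen: "Vk k (yv r) $ i = lr r $ k * av r $ i"
  using Vk_a exhaust_2[of k] by auto

lemma W_dec: "W i j k = (\<Sum>r\<in>UNIV. av r $ i * lr r $ k * Yi $ r $ j)"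
proof -
  define Wk where "Wk = (\<chi> i j. W i j k)"
  have WY: "(Wk ** YY) $ i $ r = lr r $ k * av r $ i" for i r
    using Vk_gen[of k r i] by (simp add: matrix_matrix_mult_def Wk_def YY_def Vk_def)
  have "W i j k = (Wk ** mat 1) $ i $ j" by (simp add: Wk_def)
  also have "\<dots> = ((Wk ** YY) ** Yi) $ i $ j" by (simp only: Yi(1)[symmetric] matrix_mul_assoc)
  also have "\<dots> = (\<Sum>r\<in>UNIV. av r $ i * lr r $ k * Yi $ r $ j)"
    by (simp add: matrix_matrix_mult_def[of "Wk ** YY"] WY algebra_simps)
  finally show ?thesis .
qed

definition "AA = (\<chi> i r. av r $ i)"

lemma W_mat: "slicecomb W g = AA ** (\<chi> i j. if i = j then linform (lr i) g else 0) ** Yi"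
proof -
  have "slicecomb W g $ i $ j = (AA ** (\<chi> i j. if i = j then linform (lr i) g else 0) ** Yi) $ i $ j" for i j
  proof -
    have "slicecomb W g $ i $ j = (\<Sum>k\<in>UNIV. \<Sum>r\<in>UNIV. g$k * (av r $ i * lr r $ k * Yi $ r $ j))"
      by (simp add: slicecomb_nth W_dec[of i j] sum_distrib_left)
    also have "\<dots> = (\<Sum>r\<in>UNIV. \<Sum>k\<in>UNIV. g$k * (av r $ i * lr r $ k * Yi $ r $ j))" by (rule sum.swap)
    also have "\<dots> = (\<Sum>r\<in>UNIV. av r $ i * linform (lr r) g * Yi $ r $ j)"
      by (rule sum.cong) (simp_all add: linform_def sum_distrib_left sum_distrib_right algebra_simps)
    also have "\<dots> = (\<Sum>r\<in>UNIV. (AA ** (\<chi> i j. if i = j then linform (lr i) g else 0)) $ i $ r * Yi $ r $ j)"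
      by (simp add: diag_right AA_def)
    also have "\<dots> = (AA ** (\<chi> i j. if i = j then linform (lr i) g else 0) ** Yi) $ i $ j"
      by (simp only: matrix_matrix_mult_def vec_lambda_beta)
    finally show ?thesis .
  qed
  then show ?thesis by (simp add: vec_eq_iff)
qed

definition "kap = det AA * det Yi"

lemma charW: "charpoly W g = kap * (\<Prod>r\<in>UNIV. linform (lr r) g)"
  unfolding charpoly_def W_mat det_diag3 kap_def by simp

lemma kap_nz: "kap \<noteq> 0" using charW_gs charW[of gs] by auto

lemma kapK: "inK realK kap"
proof -
  have p: "(\<Prod>r\<in>UNIV. lam r) \<noteq> 0" using lam_nz by simp
  have "kap = charpoly W gs / (\<Prod>r\<in>UNIV. lam r)" using charW[of gs] p by (simp add: lam_def)
  moreover have "inK realK (charpoly W gs)"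
    unfolding charpoly_def by (rule det_inK[OF slicecomb_K[OF WK gsK]])
  moreover have "inK realK (\<Prod>r\<in>UNIV. lam r)" by (rule inK_prod) (simp add: lamK)
  ultimately show ?thesis by (simp add: inK_simps)
qed

definition "LW0 r = (if r = r0 then kap *s lr r else lr r)"

lemma LW0K: "vecK realK (LW0 r)"
  using lr(1)[of r] kapK unfolding LW0_def vecK_def by (auto intro: inK_simps)

lemma charW_LW0: "charpoly W g = (\<Prod>r\<in>UNIV. linform (LW0 r) g)"
proof -
  have "(\<Prod>r\<in>UNIV. linform (LW0 r) g) = linform (LW0 r0) g * (\<Prod>r\<in>UNIV-{r0}. linform (LW0 r) g)"
    by (rule prod.remove) auto
  also have "(\<Prod>r\<in>UNIV-{r0}. linform (LW0 r) g) = (\<Prod>r\<in>UNIV-{r0}. linform (lr r) g)"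
    by (rule prod.cong) (auto simp: LW0_def)
  also have "linform (LW0 r0) g = kap * linform (lr r0) g" by (simp add: LW0_def linform_smult)
  also have "kap * linform (lr r0) g * (\<Prod>r\<in>UNIV-{r0}. linform (lr r) g) = kap * (\<Prod>r\<in>UNIV. linform (lr r) g)"
    by (simp add: prod.remove[of UNIV r0] mult.assoc)
  finally show ?thesis by (simp add: charW)
qed

lemma simpleW: "simple_tensor realK W"
  unfolding simple_tensor_def
proof (intro conjI exI[of _ gs] exI[of _ LW0] allI impI)
  show "vecK realK gs" by (rule gsK)
  show "invertible (slicecomb W gs)" using charW_gs by (simp add: charpoly_def invertible_det_nz)
  show "vecK realK (LW0 r)" for r by (rule LW0K)
  show "charpoly W g = (\<Prod>r\<in>UNIV. linform (LW0 r) g)" for g by (rule charW_LW0)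
  fix r s :: 'n assume ne: "r \<noteq> s"
  show "\<not> proportional (LW0 r) (LW0 s)"
  proof
    assume "proportional (LW0 r) (LW0 s)"
    then have "wedge (LW0 r) (LW0 s) = 0" by (rule prop_wedge)
    then have "wedge (lr r) (lr s) = 0" using kap_nz
      by (auto simp: LW0_def wedge_smult_l wedge_smult_r split: if_splits)
    then show False using lr_distinct[OF ne] by simp
  qed
qed

end


lemma smult_span:
  fixes v :: "complex^'n"
  assumes "v \<in> S" "\<i> *s v \<in> S"
  shows "c *s v \<in> span S"
proof -
  have "c *s v = Re c *\<^sub>R v + Im c *\<^sub>R (\<i> *s v)"
    unfolding vec_eq_iff vector_add_component vector_scaleR_component vector_smult_component
    by (simp add: scaleR_conv_of_real complex_eq_iff algebra_simps)
  also have "\<dots> \<in> span S" using assms by (intro span_add span_mul span_base)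
  finally show ?thesis .
qed

context thm_setup begin

lemma rankW_le: "rank_le realK W CARD('n)"
proof -
  obtain h where h: "bij_betw h {0..<card (UNIV::'n set)} (UNIV::'n set)"
    using ex_bij_betw_nat_finite[of "UNIV::'n set"] by auto
  have "W = (\<lambda>i j k. \<Sum>n<CARD('n). av (h n) $ i * Yi $ h n $ j * lr (h n) $ k)"
  proof (intro ext)
    fix i j k
    have "(\<Sum>n<CARD('n). av (h n) $ i * Yi $ h n $ j * lr (h n) $ k)
        = (\<Sum>r\<in>UNIV. av r $ i * Yi $ r $ j * lr r $ k)"
      using sum.reindex_bij_betw[OF h, of "\<lambda>r. av r $ i * Yi $ r $ j * lr r $ k"]
      by (simp add: atLeast0LessThan)
    then show "W i j k = (\<Sum>n<CARD('n). av (h n) $ i * Yi $ h n $ j * lr (h n) $ k)"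
      by (simp add: W_dec mult_ac)
  qed
  moreover have "\<forall>r i. inK realK (av (h r) $ i)" using avK by (simp add: vecK_def)
  moreover have "\<forall>r j. inK realK (Yi $ h r $ j)" using YiK by simp
  moreover have "\<forall>r k. inK realK (lr (h r) $ k)" using lr(1) by (simp add: vecK_def)
  ultimately show ?thesis unfolding rank_le_def
    by (intro exI[of _ "\<lambda>r i. av (h r) $ i"] exI[of _ "\<lambda>r j. Yi $ h r $ j"] exI[of _ "\<lambda>r k. lr (h r) $ k"] conjI)
      simp_all
qed

lemma rank_lower: assumes "rank_le realK W m" shows "CARD('n) \<le> m"
proof (rule ccontr)
  assume "\<not> CARD('n) \<le> m"
  then have mlt: "m < CARD('n)" by simp
  obtain a b c where W: "W = (\<lambda>i j k. \<Sum>r<m. a r i * b r j * c r k)"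
    using assms unfolding rank_le_def by blast
  define M where "M = slicecomb W gs"
  have "invertible M" using charW_gs by (simp add: M_def charpoly_def invertible_det_nz)
  then obtain Mi where Mi: "M ** Mi = mat 1" using invertible_right_inverse by blast
  define av' where "av' n = (\<chi> i. a n i)" for n
  define S where "S = av' ` {..<m} \<union> (\<lambda>n. \<i> *s av' n) ` {..<m}"
  have finS: "finite S" by (simp add: S_def)
  have cardS: "card S \<le> 2 * m"
  proof -
    have "card (av' ` {..<m}) \<le> m" using card_image_le[of "{..<m}" av'] by simp
    moreover have "card ((\<lambda>n. \<i> *s av' n) ` {..<m}) \<le> m"
      using card_image_le[of "{..<m}" "\<lambda>n. \<i> *s av' n"] by simp
    ultimately show ?thesis unfolding S_def using card_Un_le[of "av' ` {..<m}" "(\<lambda>n. \<i> *s av' n) ` {..<m}"]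
      by linarith
  qed
  have inspan: "M *v x \<in> span S" for x
  proof -
    define co where "co n = (\<Sum>j\<in>UNIV. b n j * x$j) * (\<Sum>k\<in>UNIV. gs$k * c n k)" for n
    have "(M *v x) $ i = (\<Sum>n<m. co n *s av' n) $ i" for i
    proof -
      have "(M *v x) $ i = (\<Sum>j\<in>UNIV. \<Sum>k\<in>UNIV. \<Sum>n<m. a n i * (b n j * x$j) * (gs$k * c n k))"
        unfolding M_def mv_slicecomb W by (simp add: sum_distrib_left sum_distrib_right mult_ac)
      also have "\<dots> = (\<Sum>j\<in>UNIV. \<Sum>n<m. \<Sum>k\<in>UNIV. a n i * (b n j * x$j) * (gs$k * c n k))"
        by (rule sum.cong[OF refl], rule sum.swap)
      also have "\<dots> = (\<Sum>n<m. \<Sum>j\<in>UNIV. \<Sum>k\<in>UNIV. a n i * (b n j * x$j) * (gs$k * c n k))"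
        by (rule sum.swap)
      also have "\<dots> = (\<Sum>n<m. co n * a n i)"
        unfolding co_def sum_product by (simp add: sum_distrib_left sum_distrib_right mult_ac)
      also have "\<dots> = (\<Sum>n<m. co n *s av' n) $ i" by (simp add: sum_component av'_def)
      finally show ?thesis .
    qed
    then have "M *v x = (\<Sum>n<m. co n *s av' n)" by (simp add: vec_eq_iff)
    also have "\<dots> \<in> span S"
      by (rule span_sum, rule smult_span) (auto simp: S_def)
    finally show ?thesis .
  qed
  have "UNIV \<subseteq> span S"
  proof
    fix x :: "complex^'n"
    have "x = M *v (Mi *v x)" by (simp add: matrix_vector_mul_assoc Mi)
    then show "x \<in> span S" using inspan by metis
  qed
  then have "dim (UNIV :: (complex^'n) set) \<le> card S" by (rule real_vector.dim_le_card[OF _ finS])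
  then have "CARD('n) * 2 \<le> 2 * m" using cardS by simp
  then show False using mlt by simp
qed

lemma KrankW: "Krank realK W = CARD('n)"
  unfolding Krank_def
proof (rule Least_equality)
  show "rank_le realK W CARD('n)" by (rule rankW_le)
  fix m assume "rank_le realK W m" then show "CARD('n) \<le> m" by (rule rank_lower)
qed

lemma md_bound:
  assumes spW: "is_spectrum realK W LW"
  shows "md L LW \<le> mm"
proof -
  have sp: "\<forall>r. vecK realK (LW r)" "\<exists>g. vecK realK g \<and> charpoly W g \<noteq> 0"
    "\<And>g. vecK realK g \<Longrightarrow> charpoly W g = (\<Prod>r\<in>UNIV. linform (LW r) g)"
    using spW unfolding is_spectrum_def by auto
  have LW_nz: "LW r \<noteq> 0" for r
  proof
    assume "LW r = 0"
    obtain g where "vecK realK g" "charpoly W g \<noteq> 0" using sp(2) by blast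
    moreover have "linform (LW r) g = 0" using \<open>LW r = 0\<close> by (simp add: linform_def)
    ultimately show False using sp(3)[of g] by (metis UNIV_I finite_class.finite_UNIV prod_zero)
  qed
  have ex: "\<exists>s. wedge (LW s) (lr r) = 0" for r
  proof -
    have "(\<Prod>s\<in>UNIV. linform (LW s) (perp (lr r))) = 0"
      using sp(3)[OF perp_K[OF lr(1)]] lr(3) by simp
    then obtain s where "linform (LW s) (perp (lr r)) = 0" by auto
    then show ?thesis by (auto simp: linform_perp)
  qed
  define sg where "sg r = (SOME s. wedge (LW s) (lr r) = 0)" for r
  have sg: "wedge (LW (sg r)) (lr r) = 0" for r unfolding sg_def using ex by (rule someI_ex)
  have "inj sg"
  proof (rule injI)
    fix r r' assume "sg r = sg r'"
    then have "wedge (lr r) (lr r') = 0"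
      using wedge_trans0[OF LW_nz sg[of r]] sg[of r'] by simp
    then show "r = r'" using lr_distinct by blast
  qed
  define pi where "pi = sg \<circ> tau"
  have "inj pi" unfolding pi_def using \<open>inj sg\<close> tau_inj by (rule inj_compose)
  then have "bij pi" by (simp add: bij_def finite_UNIV_inj_surj)
  then have perm: "pi permutes UNIV" by (intro bij_imp_permutes) simp_all
  have each: "chordal (L i) (LW (pi i)) \<le> mm" for i
  proof -
    define r where "r = tau i"
    have "chordal (L i) (LW (pi i)) = chordal (cc r) (LW (sg r))"
      unfolding pi_def r_def using chordal_L[OF LW_nz] by simp
    also have "\<dots> = chordal (cc r) (lr r)" by (rule chordal_cong2[OF cc_nz LW_nz lr(2) sg])
    also have "\<dots> \<le> mm" by (rule lr(4))
    finally show ?thesis .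
  qed
  have "md L LW \<le> Max ((\<lambda>r. chordal (L r) (LW (pi r))) ` UNIV)"
    unfolding md_def by (rule Min_le) (use perm finite_permutations in auto)
  also have "\<dots> \<le> mm" using each by (simp add: Max_le_iff)
  finally show ?thesis .
qed

end

theorem theorem2p8:
  fixes realK :: bool
    and T W :: "('n::finite, 'n, 2) tensor"
    and A B :: "complex ^ 'n ^ 'n"
    and C :: "complex ^ 'n ^ 2"
    and L :: "'n \<Rightarrow> complex ^ 2"
  assumes R2: "CARD('n) \<ge> 2"
    and TK: "tensorK realK T" and WK: "tensorK realK W"
    and rankT: "Krank realK T = CARD('n)"
    and AK: "\<forall>i r. inK realK (A $ i $ r)" and BK: "\<forall>i r. inK realK (B $ i $ r)"
    and CK: "\<forall>k r. inK realK (C $ k $ r)"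
    and cpdT: "T = cpd A B C"
    and Cunit: "\<forall>r. norm (column r C) = 1"
    and specT: "is_spectrum realK T L"
    and small: "spnorm realK (\<lambda>i j k. T i j k - W i j k)
        < sigma_min A * sigma_min B * Min {chordal (L i) (L j) |i j. i \<noteq> j} / 2"
  shows "simple_tensor realK W \<and> Krank realK W = CARD('n) \<and>
         (\<forall>LW. is_spectrum realK W LW \<longrightarrow>
            md L LW \<le> spnorm realK (\<lambda>i j k. T i j k - W i j k) / (sigma_min A * sigma_min B))"
proof -
  interpret S: thm_setup realK T W A B C L
    by (rule thm_setup.intro) (fact R2 TK WK AK BK CK cpdT Cunit specT small)+
  have mm: "S.mm = spnorm realK (\<lambda>i j k. T i j k - W i j k) / (sigma_min A * sigma_min B)"
    unfolding S.mm_def S.eps_def S.sig_def S.Et_def ..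
  show ?thesis using S.simpleW S.KrankW S.md_bound unfolding mm by blast
qed


end
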